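(* Let $L$ and $L'$ be regular languages whose minimal DFAs have the same (i.e. isomorphic) underlying simple directed graphs, $G(L)\cong G(L')$. Then $g(L) = g(L')$.
   Context: A DFA over a finite alphabet $\Sigma$ is $(Q,q_0,F,\delta)$ with $Q$ finite, $\delta:Q\times\Sigma\to Q$. Its underlying undirected multigraph has vertex set $Q$ and one edge joining $q$ and $\delta(q,a)$ for each transition. The genus of a finite multigraph is the least genus of a closed orientable surface into which it embeds; $g(A)$ is the genus of the underlying multigraph of $A$; $g(L)=\min\{g(A): A\text{ a DFA recognizing }L\}$. The underlying simple directed graph $G(L)$ of $L$ has as vertices the states of the minimal DFA of $L$, with an edge $q\to q'$ iff $q\neq q'$ and $\delta(q,a)=q'$ for some letter $a$. *)

theory Defs
  imports Main "HOL-Combinatorics.Orbits" "HOL-Combinatorics.Permutations"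
begin

text \<open>A finite multigraph: vertex set V, edge index set E, and for each edge its two
  end vertices (loops allowed: both ends equal).\<close>

definition mg_darts :: "'e set \<Rightarrow> ('e \<times> bool) set" where
  "mg_darts E = E \<times> UNIV"

definition dart_vertex :: "('e \<Rightarrow> 'v \<times> 'v) \<Rightarrow> 'e \<times> bool \<Rightarrow> 'v" where
  "dart_vertex ends d = (if snd d then fst (ends (fst d)) else snd (ends (fst d)))"

definition dart_flip :: "'e \<times> bool \<Rightarrow> 'e \<times> bool" where
  "dart_flip d = (fst d, \<not> snd d)"

definition rotation_system :: "'e set \<Rightarrow> ('e \<Rightarrow> 'v \<times> 'v) \<Rightarrow> ('e \<times> bool \<Rightarrow> 'e \<times> bool) \<Rightarrow> bool" where
  "rotation_system E ends \<sigma> \<longleftrightarrow>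
     \<sigma> permutes mg_darts E \<and>
     (\<forall>d \<in> mg_darts E. orbit \<sigma> d = {d' \<in> mg_darts E. dart_vertex ends d' = dart_vertex ends d})"

definition isolated_vertices :: "'v set \<Rightarrow> 'e set \<Rightarrow> ('e \<Rightarrow> 'v \<times> 'v) \<Rightarrow> 'v set" where
  "isolated_vertices V E ends = {v \<in> V. \<forall>d \<in> mg_darts E. dart_vertex ends d \<noteq> v}"

text \<open>Faces of the cellular embedding determined by a rotation system: orbits of
  \<sigma> \<circ> flip on darts; an isolated vertex is a component embedded in a sphere with one face.\<close>

definition num_faces :: "'v set \<Rightarrow> 'e set \<Rightarrow> ('e \<Rightarrow> 'v \<times> 'v) \<Rightarrow> ('e \<times> bool \<Rightarrow> 'e \<times> bool) \<Rightarrow> nat" where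
  "num_faces V E ends \<sigma> =
     card ((\<lambda>d. orbit (\<sigma> \<circ> dart_flip) d) ` mg_darts E) + card (isolated_vertices V E ends)"

definition mg_adj :: "'e set \<Rightarrow> ('e \<Rightarrow> 'v \<times> 'v) \<Rightarrow> ('v \<times> 'v) set" where
  "mg_adj E ends = {(fst (ends e), snd (ends e)) | e. e \<in> E} \<union> {(snd (ends e), fst (ends e)) | e. e \<in> E}"

definition num_components :: "'v set \<Rightarrow> 'e set \<Rightarrow> ('e \<Rightarrow> 'v \<times> 'v) \<Rightarrow> nat" where
  "num_components V E ends = card (V // {(p, q). p \<in> V \<and> q \<in> V \<and> (p, q) \<in> (mg_adj E ends)\<^sup>*})"

text \<open>Genus of the embedding given by a rotation system (Euler's formula, summed over the
  connected components: sum_i (2 - V_i + E_i - F_i) / 2).\<close>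

definition rotation_genus :: "'v set \<Rightarrow> 'e set \<Rightarrow> ('e \<Rightarrow> 'v \<times> 'v) \<Rightarrow> ('e \<times> bool \<Rightarrow> 'e \<times> bool) \<Rightarrow> nat" where
  "rotation_genus V E ends \<sigma> =
     nat ((2 * int (num_components V E ends) - int (card V) + int (card E)
           - int (num_faces V E ends \<sigma>)) div 2)"

text \<open>Genus of a finite multigraph: least genus over all rotation systems (i.e. over all
  cellular embeddings of its components into closed orientable surfaces).\<close>

definition mg_genus :: "'v set \<Rightarrow> 'e set \<Rightarrow> ('e \<Rightarrow> 'v \<times> 'v) \<Rightarrow> nat" where
  "mg_genus V E ends = (LEAST n. \<exists>\<sigma>. rotation_system E ends \<sigma> \<and> rotation_genus V E ends \<sigma> = n)"

record 'a dfa =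
  states :: "nat set"
  init :: nat
  final :: "nat set"
  delta :: "nat \<Rightarrow> 'a \<Rightarrow> nat"

definition is_dfa :: "'a set \<Rightarrow> 'a dfa \<Rightarrow> bool" where
  "is_dfa \<Sigma> A \<longleftrightarrow> finite (states A) \<and> init A \<in> states A \<and> final A \<subseteq> states A \<and>
     (\<forall>q \<in> states A. \<forall>a \<in> \<Sigma>. delta A q a \<in> states A)"

definition dfa_lang :: "'a set \<Rightarrow> 'a dfa \<Rightarrow> 'a list set" where
  "dfa_lang \<Sigma> A = {w \<in> lists \<Sigma>. foldl (delta A) (init A) w \<in> final A}"

definition regular :: "'a set \<Rightarrow> 'a list set \<Rightarrow> bool" where
  "regular \<Sigma> L \<longleftrightarrow> (\<exists>A. is_dfa \<Sigma> A \<and> dfa_lang \<Sigma> A = L)"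

definition dfa_genus :: "'a set \<Rightarrow> 'a dfa \<Rightarrow> nat" where
  "dfa_genus \<Sigma> A = mg_genus (states A) (states A \<times> \<Sigma>) (\<lambda>(q, a). (q, delta A q a))"

definition lang_genus :: "'a set \<Rightarrow> 'a list set \<Rightarrow> nat" where
  "lang_genus \<Sigma> L = (LEAST n. \<exists>A. is_dfa \<Sigma> A \<and> dfa_lang \<Sigma> A = L \<and> dfa_genus \<Sigma> A = n)"

definition minimal_dfa :: "'a set \<Rightarrow> 'a list set \<Rightarrow> 'a dfa \<Rightarrow> bool" where
  "minimal_dfa \<Sigma> L M \<longleftrightarrow> is_dfa \<Sigma> M \<and> dfa_lang \<Sigma> M = L \<and>
     (\<forall>A. is_dfa \<Sigma> A \<and> dfa_lang \<Sigma> A = L \<longrightarrow> card (states M) \<le> card (states A))"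

definition dfa_simple_edge :: "'a set \<Rightarrow> 'a dfa \<Rightarrow> nat \<Rightarrow> nat \<Rightarrow> bool" where
  "dfa_simple_edge \<Sigma> A q q' \<longleftrightarrow> q \<noteq> q' \<and> (\<exists>a \<in> \<Sigma>. delta A q a = q')"

definition simple_digraph_iso :: "'a set \<Rightarrow> 'a dfa \<Rightarrow> 'a dfa \<Rightarrow> bool" where
  "simple_digraph_iso \<Sigma> A B \<longleftrightarrow> (\<exists>f. bij_betw f (states A) (states B) \<and>
     (\<forall>q \<in> states A. \<forall>q' \<in> states A.
        dfa_simple_edge \<Sigma> A q q' \<longleftrightarrow> dfa_simple_edge \<Sigma> B (f q) (f q')))"

end

theory Submission
  imports Defs
begin


definition cyc :: "('a \<Rightarrow> 'a) \<Rightarrow> 'a set \<Rightarrow> nat" where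
  "cyc f S = card ((\<lambda>d. orbit f d) ` S)"

lemma perm_self_in_orbit: "f permutes S \<Longrightarrow> finite S \<Longrightarrow> p \<in> orbit f p"
  by (meson permutation_permutes permutation_self_in_orbit)

lemma perm_orbit_same:
  assumes "f permutes S" "finite S" "d \<in> orbit f p" shows "orbit f d = orbit f p"
  using assms by (metis cyclic_on_orbit orbit_cyclic_eq3)

lemma perm_orbit_sym:
  assumes "f permutes S" "finite S" "d \<in> orbit f p" shows "p \<in> orbit f d"
  using perm_orbit_same[OF assms] perm_self_in_orbit[OF assms(1,2)] by simp

lemma perm_orbit_disj:
  assumes "f permutes S" "finite S" "z \<in> orbit f p" "z \<in> orbit f q" shows "orbit f p = orbit f q"
  using perm_orbit_same[OF assms(1,2,3)] perm_orbit_same[OF assms(1,2,4)] by simp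

lemma merge_orbit:
  assumes perm: "f permutes S" and fin: "finite S" and pS: "p \<in> S" and qS: "q \<in> S"
    and nq: "q \<notin> orbit f p"
  defines "g \<equiv> f \<circ> Transposition.transpose p q"
  shows "g permutes S" "orbit g p = orbit f p \<union> orbit f q"
    "\<And>z. z \<notin> orbit f p \<union> orbit f q \<Longrightarrow> orbit g z = orbit f z"
proof -
  show gp: "g permutes S" unfolding g_def
    by (rule permutes_compose[OF _ perm]) (simp add: pS qS permutes_swap_id)
  have pq: "p \<noteq> q" using nq perm_self_in_orbit[OF perm fin] by auto
  have np: "p \<notin> orbit f q" using nq perm_orbit_sym[OF perm fin] by blast
  have g_other: "\<And>z. z \<noteq> p \<Longrightarrow> z \<noteq> q \<Longrightarrow> g z = f z" by (simp add: g_def)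
  have g_p: "g p = f q" and g_q: "g q = f p" by (simp_all add: g_def)
  show "orbit g p = orbit f p \<union> orbit f q"
  proof
    show "orbit g p \<subseteq> orbit f p \<union> orbit f q"
    proof
      fix y assume "y \<in> orbit g p" then show "y \<in> orbit f p \<union> orbit f q"
      proof induct
        case base then show ?case by (simp add: g_p orbit.base)
      next
        case (step y) then show ?case
          using g_other g_p g_q by (cases "y = p \<or> y = q") (auto intro: orbit.intros)
      qed
    qed
    have A: "orbit f q \<subseteq> orbit g p"
    proof
      fix y assume "y \<in> orbit f q" then show "y \<in> orbit g p"
      proof induct
        case base then show ?case by (metis g_p orbit.base)
      next
        case (step y)
        show ?case
        proof (cases "y = q")
          case True then show ?thesis using g_p by (metis orbit.base)
        next
          case False
          then have "y \<noteq> p" using step np by blast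
          then show ?thesis using False g_other[of y] step by (metis orbit.step)
        qed
      qed
    qed
    have B: "orbit f p \<subseteq> orbit g p"
    proof
      fix y assume "y \<in> orbit f p" then show "y \<in> orbit g p"
      proof induct
        case base
        have "q \<in> orbit g p" using A perm_self_in_orbit[OF perm fin] by blast
        then show ?case by (metis g_q orbit.step)
      next
        case (step y)
        show ?case
        proof (cases "y = p")
          case True
          have "q \<in> orbit g p" using A perm_self_in_orbit[OF perm fin] by blast
          then show ?thesis using True by (metis g_q orbit.step)
        next
          case False
          then have "y \<noteq> q" using step nq by blast
          then show ?thesis using False g_other[of y] step by (metis orbit.step)
        qed
      qed
    qed
    show "orbit f p \<union> orbit f q \<subseteq> orbit g p" using A B by blast
  qed
  fix z assume z: "z \<notin> orbit f p \<union> orbit f q"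
  have "\<And>s. s \<in> orbit f z \<Longrightarrow> g s = f s"
  proof -
    fix s assume s: "s \<in> orbit f z"
    have "s \<noteq> p" using s z perm_orbit_sym[OF perm fin] by blast
    moreover have "s \<noteq> q" using s z perm_orbit_sym[OF perm fin] by blast
    ultimately show "g s = f s" by (rule g_other)
  qed
  then show "orbit g z = orbit f z"
    by (intro orbit_cong perm_self_in_orbit[OF perm fin])
qed

lemma merge_cyc:
  assumes perm: "f permutes S" and fin: "finite S" and pS: "p \<in> S" and qS: "q \<in> S"
    and nq: "q \<notin> orbit f p"
  shows "cyc (f \<circ> Transposition.transpose p q) S + 1 = cyc f S"
proof -
  define g where "g = f \<circ> Transposition.transpose p q"
  note M = merge_orbit[OF assms, folded g_def]
  define Op where "Op = orbit f p"
  define Oq where "Oq = orbit f q"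
  have pOp: "p \<in> Op" "q \<in> Oq" unfolding Op_def Oq_def using perm_self_in_orbit[OF perm fin] by auto
  have neq: "Op \<noteq> Oq" using nq pOp unfolding Op_def by auto
  let ?O = "(\<lambda>d. orbit f d) ` S"
  let ?O' = "(\<lambda>d. orbit g d) ` S"
  have eq: "?O' = (?O - {Op, Oq}) \<union> {Op \<union> Oq}"
  proof (intro set_eqI iffI)
    fix X assume "X \<in> ?O'"
    then obtain d where d: "d \<in> S" "X = orbit g d" by auto
    show "X \<in> (?O - {Op, Oq}) \<union> {Op \<union> Oq}"
    proof (cases "d \<in> Op \<union> Oq")
      case True
      then have "d \<in> orbit g p" using M(2) Op_def Oq_def by auto
      then have "X = orbit g p" using perm_orbit_same[OF M(1) fin] d by auto
      then show ?thesis using M(2) Op_def Oq_def by auto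
    next
      case False
      then have X: "X = orbit f d" using M(3) d Op_def Oq_def by auto
      have "X \<noteq> Op" "X \<noteq> Oq" using False X perm_self_in_orbit[OF perm fin, of d] by auto
      then show ?thesis using X d by auto
    qed
  next
    fix X assume X: "X \<in> (?O - {Op, Oq}) \<union> {Op \<union> Oq}"
    show "X \<in> ?O'"
    proof (cases "X = Op \<union> Oq")
      case True then show ?thesis using M(2) pS Op_def Oq_def by (metis image_eqI)
    next
      case False
      then obtain d where d: "d \<in> S" "X = orbit f d" "X \<noteq> Op" "X \<noteq> Oq" using X by auto
      have "d \<notin> Op \<union> Oq"
      proof
        assume "d \<in> Op \<union> Oq"
        then show False using d perm_orbit_same[OF perm fin] Op_def Oq_def by auto
      qed
      then have "X = orbit g d" using M(3) d Op_def Oq_def by auto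
      then show ?thesis using d by auto
    qed
  qed
  have notin: "Op \<union> Oq \<notin> ?O - {Op, Oq}"
  proof
    assume "Op \<union> Oq \<in> ?O - {Op, Oq}"
    then obtain d where d: "Op \<union> Oq = orbit f d" "Op \<union> Oq \<noteq> Op" by auto
    have "p \<in> orbit f d" using d pOp by auto
    then have "orbit f p = orbit f d" using perm_orbit_same[OF perm fin] by auto
    then show False using d Op_def by auto
  qed
  have fin2: "finite ?O" using fin by auto
  have "Op \<in> ?O" "Oq \<in> ?O" using pS qS Op_def Oq_def by auto
  then have "card (?O - {Op, Oq}) + 2 = card ?O" using neq fin2
  proof -
    have "{Op, Oq} \<subseteq> ?O" using \<open>Op \<in> ?O\<close> \<open>Oq \<in> ?O\<close> by auto
    moreover have "card {Op, Oq} = 2" using neq by simp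
    moreover have "card {Op, Oq} \<le> card ?O" using calculation(1) fin2 card_mono by blast
    ultimately show ?thesis using card_Diff_subset[of "{Op,Oq}" ?O] fin2 by simp
  qed
  moreover have "card ?O' = card (?O - {Op, Oq}) + 1"
    using eq notin fin2 by simp
  ultimately show ?thesis unfolding cyc_def g_def by simp
qed

lemma split_orbit:
  assumes perm: "f permutes S" and fin: "finite S" and pS: "p \<in> S" and qS: "q \<in> S"
    and pq: "p \<noteq> q" and q: "q \<in> orbit f p"
  shows "q \<notin> orbit (f \<circ> Transposition.transpose p q) p"
proof -
  define g where "g = f \<circ> Transposition.transpose p q"
  have gp: "g permutes S" unfolding g_def
    by (rule permutes_compose[OF _ perm]) (simp add: pS qS permutes_swap_id)
  define k where "k = funpow_dist1 f p q"
  have fk: "(f ^^ k) p = q" unfolding k_def using funpow_dist1_prop[OF q] .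
  define T where "T = {(f ^^ j) p | j. 1 \<le> j \<and> j \<le> k}"
  have pT: "p \<notin> T"
  proof
    assume "p \<in> T"
    then obtain j where j: "(f ^^ j) p = p" "1 \<le> j" "j \<le> k" unfolding T_def by (smt (verit) mem_Collect_eq)
    have "k \<le> j" unfolding k_def using funpow_dist1_le_self[OF j(1) _ q] j(2) by simp
    then have "j = k" using j by simp
    then show False using j fk pq by simp
  qed
  have "orbit g q \<subseteq> T"
  proof
    fix y assume "y \<in> orbit g q" then show "y \<in> T"
    proof induct
      case base
      have "g q = (f ^^ 1) p" by (simp add: g_def)
      moreover have "1 \<le> k" unfolding k_def by simp
      ultimately show ?case unfolding T_def by blast
    next
      case (step y)
      then obtain j where j: "y = (f ^^ j) p" "1 \<le> j" "j \<le> k" unfolding T_def by auto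
      show ?case
      proof (cases "j = k")
        case True
        then have "g y = (f ^^ 1) p" using j fk by (simp add: g_def)
        moreover have "1 \<le> k" unfolding k_def by simp
        ultimately show ?thesis unfolding T_def by blast
      next
        case False
        then have "y \<noteq> q" using j funpow_dist1_least[where n=j and f=f and x=p and y=q] k_def by simp
        moreover have "y \<noteq> p" using step pT by auto
        ultimately have "g y = (f ^^ Suc j) p" using j by (simp add: g_def)
        then show ?thesis unfolding T_def using j False by force
      qed
    qed
  qed
  then have "p \<notin> orbit g q" using pT by auto
  then show ?thesis using perm_orbit_sym[OF gp fin] unfolding g_def by blast
qed

lemma split_cyc:
  assumes perm: "f permutes S" and fin: "finite S" and pS: "p \<in> S" and qS: "q \<in> S"
    and pq: "p \<noteq> q" and q: "q \<in> orbit f p"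
  shows "cyc (f \<circ> Transposition.transpose p q) S = cyc f S + 1"
proof -
  define g where "g = f \<circ> Transposition.transpose p q"
  have gp: "g permutes S" unfolding g_def
    by (rule permutes_compose[OF _ perm]) (simp add: pS qS permutes_swap_id)
  have "g \<circ> Transposition.transpose p q = f" unfolding g_def by (simp add: comp_assoc)
  with merge_cyc[OF gp fin pS qS split_orbit[OF assms, folded g_def]]
  show ?thesis unfolding g_def by simp
qed




lemma orbit_fixed: "f x = x \<Longrightarrow> orbit f x = {x}"
  by (simp add: orbit_eq_singleton_iff)

lemma merge_coarsen:
  assumes perm: "f permutes S" and fin: "finite S" and pS: "p \<in> S" and qS: "q \<in> S"
    and nq: "q \<notin> orbit f p" and d: "d2 \<in> orbit f d1" "d1 \<in> S"
  shows "d2 \<in> orbit (f \<circ> Transposition.transpose p q) d1"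
proof -
  note M = merge_orbit[OF perm fin pS qS nq]
  show ?thesis
  proof (cases "d1 \<in> orbit f p \<union> orbit f q")
    case True
    then have "d1 \<in> orbit (f \<circ> Transposition.transpose p q) p" using M(2) by auto
    then have e: "orbit (f \<circ> Transposition.transpose p q) d1 = orbit f p \<union> orbit f q"
      using perm_orbit_same[OF M(1) fin] M(2) by auto
    have "orbit f d1 \<subseteq> orbit f p \<union> orbit f q" using True perm_orbit_same[OF perm fin] by auto
    then show ?thesis using e d by auto
  next
    case False then show ?thesis using M(3) d by auto
  qed
qed

locale TM =
  fixes \<tau> :: "'a \<Rightarrow> 'a" and S x y \<alpha> \<beta>
  assumes perm: "\<tau> permutes S" and fin: "finite S" and xS: "x \<in> S" and yS: "y \<in> S"
    and xy: "x \<noteq> y" and tx: "\<tau> x = x" and ty: "\<tau> y = y"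
    and aS: "\<alpha> \<in> S" and ay: "\<alpha> \<noteq> y \<or> \<beta> \<noteq> x" and bS: "\<beta> \<in> S"
begin

definition "\<tau>1 = \<tau> \<circ> Transposition.transpose y \<beta>"
definition "\<tau>' = \<tau>1 \<circ> Transposition.transpose x \<alpha>"

lemma ox: "orbit \<tau> x = {x}" using tx by (rule orbit_fixed)
lemma oy: "orbit \<tau> y = {y}" using ty by (rule orbit_fixed)

lemma t1_perm: "\<tau>1 permutes S"
  unfolding \<tau>1_def by (rule permutes_compose[OF _ perm]) (simp add: yS bS permutes_swap_id)

lemma t'_perm: "\<tau>' permutes S"
  unfolding \<tau>'_def by (rule permutes_compose[OF _ t1_perm]) (simp add: xS aS permutes_swap_id)

lemma step1:
  "\<beta> \<noteq> y \<Longrightarrow> orbit \<tau>1 y = {y} \<union> orbit \<tau> \<beta>"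
  "\<beta> \<noteq> y \<Longrightarrow> z \<notin> {y} \<union> orbit \<tau> \<beta> \<Longrightarrow> orbit \<tau>1 z = orbit \<tau> z"
proof -
  assume b: "\<beta> \<noteq> y"
  have nq: "\<beta> \<notin> orbit \<tau> y" using oy b by auto
  note M = merge_orbit[OF perm fin yS bS nq, folded \<tau>1_def]
  show "orbit \<tau>1 y = {y} \<union> orbit \<tau> \<beta>" using M(2) oy by simp
  show "z \<notin> {y} \<union> orbit \<tau> \<beta> \<Longrightarrow> orbit \<tau>1 z = orbit \<tau> z" using M(3) oy by simp
qed

lemma t1_y: "\<beta> = y \<Longrightarrow> \<tau>1 = \<tau>" unfolding \<tau>1_def by simp

lemma orbit_t1_x: "orbit \<tau>1 x \<subseteq> {x, y}"
proof (cases "\<beta> = y")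
  case True then show ?thesis using t1_y ox by simp
next
  case False
  show ?thesis
  proof (cases "\<beta> = x")
    case True then show ?thesis using step1(1)[OF False] ox perm_orbit_same[OF t1_perm fin, of x y]
      by auto
  next
    case bx: False
    have "x \<notin> orbit \<tau> \<beta>" using ox bx perm_orbit_sym[OF perm fin] by auto
    then show ?thesis using step1(2)[OF False, of x] xy ox by auto
  qed
qed

lemma orbit_t1_x2: "\<beta> \<noteq> x \<Longrightarrow> orbit \<tau>1 x = {x}"
proof -
  assume bx: "\<beta> \<noteq> x"
  show ?thesis
  proof (cases "\<beta> = y")
    case True then show ?thesis using t1_y ox by simp
  next
    case False
    have "x \<notin> orbit \<tau> \<beta>" using ox bx perm_orbit_sym[OF perm fin] by auto
    then show ?thesis using step1(2)[OF False, of x] xy ox by auto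
  qed
qed

lemma na: "\<alpha> \<noteq> x \<Longrightarrow> \<alpha> \<notin> orbit \<tau>1 x" using orbit_t1_x orbit_t1_x2 ay by auto

lemma t'_a: "\<alpha> = x \<Longrightarrow> \<tau>' = \<tau>1" unfolding \<tau>'_def by simp

lemma coarsen1: "d2 \<in> orbit \<tau> d1 \<Longrightarrow> d1 \<in> S \<Longrightarrow> d2 \<in> orbit \<tau>1 d1"
proof (cases "\<beta> = y")
  case True then show "d2 \<in> orbit \<tau> d1 \<Longrightarrow> d1 \<in> S \<Longrightarrow> d2 \<in> orbit \<tau>1 d1" using t1_y by simp
next
  case False
  have nq: "\<beta> \<notin> orbit \<tau> y" using oy False by auto
  show "d2 \<in> orbit \<tau> d1 \<Longrightarrow> d1 \<in> S \<Longrightarrow> d2 \<in> orbit \<tau>1 d1"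
    using merge_coarsen[OF perm fin yS bS nq] unfolding \<tau>1_def by blast
qed

lemma coarsen2: "d2 \<in> orbit \<tau>1 d1 \<Longrightarrow> d1 \<in> S \<Longrightarrow> d2 \<in> orbit \<tau>' d1"
proof (cases "\<alpha> = x")
  case True then show "d2 \<in> orbit \<tau>1 d1 \<Longrightarrow> d1 \<in> S \<Longrightarrow> d2 \<in> orbit \<tau>' d1" using t'_a by simp
next
  case False
  show "d2 \<in> orbit \<tau>1 d1 \<Longrightarrow> d1 \<in> S \<Longrightarrow> d2 \<in> orbit \<tau>' d1"
    using merge_coarsen[OF t1_perm fin xS aS na[OF False]] unfolding \<tau>'_def by blast
qed

lemma coarsen: "d2 \<in> orbit \<tau> d1 \<Longrightarrow> d1 \<in> S \<Longrightarrow> d2 \<in> orbit \<tau>' d1"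
  using coarsen1 coarsen2 by blast

lemma join_y: "\<beta> \<noteq> y \<Longrightarrow> \<beta> \<in> orbit \<tau>' y"
  using step1(1) coarsen2 perm_self_in_orbit[OF perm fin, of \<beta>] yS by blast

lemma join_x: "\<alpha> \<noteq> x \<Longrightarrow> \<alpha> \<in> orbit \<tau>' x"
proof -
  assume a: "\<alpha> \<noteq> x"
  note M = merge_orbit[OF t1_perm fin xS aS na[OF a], folded \<tau>'_def]
  show ?thesis using M(2) perm_self_in_orbit[OF t1_perm fin, of \<alpha>] by auto
qed

lemma orbit_tau_sub: "d \<in> S - {x, y} \<Longrightarrow> orbit \<tau> d \<subseteq> S - {x, y}"
  using permutes_orbit_subset[OF perm, of d] ox oy perm_orbit_sym[OF perm fin] by auto

lemma refine1: "d \<in> S - {x, y} \<Longrightarrow> orbit \<tau>1 d - {x, y} = orbit \<tau> d"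
proof -
  assume d: "d \<in> S - {x, y}"
  have sub: "orbit \<tau> d \<subseteq> S - {x, y}" using orbit_tau_sub[OF d] .
  show ?thesis
  proof (cases "\<beta> \<noteq> y \<and> d \<in> {y} \<union> orbit \<tau> \<beta>")
    case True
    then have "d \<in> orbit \<tau> \<beta>" using d by auto
    then have "orbit \<tau> d = orbit \<tau> \<beta>" using perm_orbit_same[OF perm fin] by auto
    moreover have "orbit \<tau>1 d = orbit \<tau>1 y"
      using True step1(1) perm_orbit_same[OF t1_perm fin] by auto
    ultimately show ?thesis using step1(1) True sub by auto
  next
    case False
    then have "orbit \<tau>1 d = orbit \<tau> d" using t1_y step1(2) by (cases "\<beta> = y") auto
    then show ?thesis using sub by auto
  qed
qed

lemma refine: "d \<in> S - {x, y} \<Longrightarrow> orbit \<tau>' d - {x, y} = orbit \<tau> d"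
proof -
  assume d: "d \<in> S - {x, y}"
  show ?thesis
  proof (cases "\<alpha> \<noteq> x \<and> d \<in> orbit \<tau>1 x \<union> orbit \<tau>1 \<alpha>")
    case True
    note M = merge_orbit[OF t1_perm fin xS aS na, folded \<tau>'_def]
    have "d \<notin> orbit \<tau>1 x" using orbit_t1_x d by auto
    then have da: "d \<in> orbit \<tau>1 \<alpha>" using True by auto
    then have "orbit \<tau>1 d = orbit \<tau>1 \<alpha>" using perm_orbit_same[OF t1_perm fin] by auto
    moreover have "orbit \<tau>' d = orbit \<tau>' x"
      using True M(2) perm_orbit_same[OF t'_perm fin] by auto
    ultimately have "orbit \<tau>' d - {x, y} = orbit \<tau>1 d - {x, y}"
      using M(2) True orbit_t1_x by auto
    then show ?thesis using refine1[OF d] by simp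
  next
    case False
    then have "orbit \<tau>' d = orbit \<tau>1 d"
    proof (cases "\<alpha> = x")
      case True then show ?thesis using t'_a by simp
    next
      case ax: False
      then show ?thesis using False merge_orbit(3)[OF t1_perm fin xS aS na[OF ax], folded \<tau>'_def] by auto
    qed
    then show ?thesis using refine1[OF d] by simp
  qed
qed

lemma a_x_orbit: "\<alpha> = x \<Longrightarrow> orbit \<tau>' x \<subseteq> {x, y}"
  using t'_a orbit_t1_x by simp

lemma b_y_orbit: "\<beta> = y \<Longrightarrow> orbit \<tau>' y \<subseteq> {x, y}"
proof -
  assume b: "\<beta> = y"
  then have t1: "\<tau>1 = \<tau>" by (rule t1_y)
  show ?thesis
  proof (cases "\<alpha> = x")
    case True then show ?thesis using t'_a t1 oy by simp
  next
    case False
    note M = merge_orbit[OF t1_perm fin xS aS na[OF False], folded \<tau>'_def]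
    show ?thesis
    proof (cases "\<alpha> = y")
      case True
      then have "y \<in> orbit \<tau>' x" using M(2) t1 oy by auto
      then have "orbit \<tau>' y = orbit \<tau>' x" using perm_orbit_same[OF t'_perm fin] by auto
      then show ?thesis using M(2) t1 oy ox True by auto
    next
      case ay2: False
      have "y \<notin> orbit \<tau> \<alpha>" using oy ay2 perm_orbit_sym[OF perm fin] by auto
      then have "orbit \<tau>' y = orbit \<tau> y" using M(3)[of y] t1 ox xy by auto
      then show ?thesis using oy by simp
    qed
  qed
qed

end




lemma flip_flip[simp]: "dart_flip (dart_flip d) = d"
  by (simp add: dart_flip_def)

lemma flip_in[simp]: "dart_flip d \<in> mg_darts E \<longleftrightarrow> d \<in> mg_darts E"
  by (simp add: dart_flip_def mg_darts_def mem_Times_iff)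

lemma flip_inj: "inj dart_flip"
  by (metis flip_flip injI)

lemma finite_darts: "finite E \<Longrightarrow> finite (mg_darts E)"
  by (simp add: mg_darts_def)

lemma darts_insert: "mg_darts (insert e E) = mg_darts E \<union> {(e, True), (e, False)}"
  by (auto simp: mg_darts_def)

lemma in_darts: "(e, b) \<in> mg_darts E \<longleftrightarrow> e \<in> E"
  by (simp add: mg_darts_def)

definition fperm :: "('e \<times> bool \<Rightarrow> 'e \<times> bool) \<Rightarrow> 'e set \<Rightarrow> 'e \<times> bool \<Rightarrow> 'e \<times> bool" where
  "fperm \<sigma> E = (\<lambda>z. if z \<in> mg_darts E then \<sigma> (dart_flip z) else z)"

lemma fperm_perm:
  assumes "\<sigma> permutes mg_darts E" shows "fperm \<sigma> E permutes mg_darts E"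
proof (rule bij_imp_permutes)
  have b1: "bij_betw dart_flip (mg_darts E) (mg_darts E)"
  proof -
    have "inj_on dart_flip (mg_darts E)" using flip_inj inj_on_subset subset_UNIV by blast
    moreover have "dart_flip ` mg_darts E = mg_darts E"
    proof
      show "dart_flip ` mg_darts E \<subseteq> mg_darts E" by auto
      show "mg_darts E \<subseteq> dart_flip ` mg_darts E"
      proof
        fix z assume "z \<in> mg_darts E"
        then have "dart_flip z \<in> mg_darts E" by simp
        then show "z \<in> dart_flip ` mg_darts E" by (metis flip_flip image_eqI)
      qed
    qed
    ultimately show ?thesis unfolding bij_betw_def by simp
  qed
  have b2: "bij_betw \<sigma> (mg_darts E) (mg_darts E)" using assms by (rule permutes_imp_bij)
  have "bij_betw (\<sigma> \<circ> dart_flip) (mg_darts E) (mg_darts E)" using bij_betw_trans[OF b1 b2] .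
  then show "bij_betw (fperm \<sigma> E) (mg_darts E) (mg_darts E)"
    by (rule bij_betw_cong[THEN iffD1, rotated]) (simp add: fperm_def)
  show "\<And>z. z \<notin> mg_darts E \<Longrightarrow> fperm \<sigma> E z = z" by (simp add: fperm_def)
qed

lemma num_faces_cyc:
  assumes "\<sigma> permutes mg_darts E"
  shows "num_faces V E ends \<sigma> = cyc (fperm \<sigma> E) (mg_darts E) + card (isolated_vertices V E ends)"
proof -
  have "\<And>d. d \<in> mg_darts E \<Longrightarrow> orbit (\<sigma> \<circ> dart_flip) d = orbit (fperm \<sigma> E) d"
    by (rule orbit_cong0) (auto simp: fperm_def permutes_in_image[OF assms])
  then have "(\<lambda>d. orbit (\<sigma> \<circ> dart_flip) d) ` mg_darts E = (\<lambda>d. orbit (fperm \<sigma> E) d) ` mg_darts E"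
    by (rule image_cong[OF refl])
  then show ?thesis unfolding num_faces_def cyc_def by simp
qed

lemma rot_perm: "rotation_system E ends \<sigma> \<Longrightarrow> \<sigma> permutes mg_darts E"
  by (simp add: rotation_system_def)

lemma rot_orbit: "rotation_system E ends \<sigma> \<Longrightarrow> d \<in> mg_darts E \<Longrightarrow>
   orbit \<sigma> d = {d' \<in> mg_darts E. dart_vertex ends d' = dart_vertex ends d}"
  by (simp add: rotation_system_def)

lemma iso_insert:
  "isolated_vertices V (insert e E) ends = isolated_vertices V E ends - {fst (ends e), snd (ends e)}"
  unfolding isolated_vertices_def darts_insert
  by (auto simp: dart_vertex_def)

definition conn :: "'e set \<Rightarrow> ('e \<Rightarrow> 'v \<times> 'v) \<Rightarrow> 'v \<Rightarrow> 'v \<Rightarrow> bool" where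
  "conn E ends p q \<longleftrightarrow> (p, q) \<in> (mg_adj E ends)\<^sup>*"

lemma adj_insert: "mg_adj (insert e E) ends = mg_adj E ends \<union> {(fst (ends e), snd (ends e)), (snd (ends e), fst (ends e))}"
  unfolding mg_adj_def by auto

lemma adj_sym: "(p, q) \<in> mg_adj E ends \<Longrightarrow> (q, p) \<in> mg_adj E ends"
  unfolding mg_adj_def by blast

lemma conn_sym: "conn E ends p q \<Longrightarrow> conn E ends q p"
  unfolding conn_def
proof (induct rule: rtrancl_induct)
  case base then show ?case by simp
next
  case (step y z)
  have "(z, y) \<in> mg_adj E ends" using step(2) by (rule adj_sym)
  then show ?case using step(3) by (rule converse_rtrancl_into_rtrancl)
qed

lemma conn_trans: "conn E ends p q \<Longrightarrow> conn E ends q r \<Longrightarrow> conn E ends p r"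
  unfolding conn_def by simp

lemma conn_refl[simp]: "conn E ends p p"
  unfolding conn_def by simp

definition cls :: "'v set \<Rightarrow> 'e set \<Rightarrow> ('e \<Rightarrow> 'v \<times> 'v) \<Rightarrow> 'v \<Rightarrow> 'v set" where
  "cls V E ends p = {q \<in> V. conn E ends p q}"

lemma num_components_cls: "num_components V E ends = card (cls V E ends ` V)"
proof -
  have "V // {(p, q). p \<in> V \<and> q \<in> V \<and> (p, q) \<in> (mg_adj E ends)\<^sup>*} = cls V E ends ` V"
    unfolding quotient_def cls_def conn_def by auto
  then show ?thesis unfolding num_components_def by simp
qed

lemma cls_eq: "conn E ends p q \<Longrightarrow> cls V E ends p = cls V E ends q"
proof -
  assume a: "conn E ends p q"
  have b: "conn E ends q p" using a by (rule conn_sym)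
  show ?thesis unfolding cls_def
  proof (intro Collect_cong conj_cong refl iffI)
    fix r assume "conn E ends p r" then show "conn E ends q r" using b by (rule conn_trans[rotated])
  next
    fix r assume "conn E ends q r" then show "conn E ends p r" using a by (rule conn_trans[rotated])
  qed
qed

lemma cls_eqD: "cls V E ends p = cls V E ends q \<Longrightarrow> q \<in> V \<Longrightarrow> conn E ends p q"
proof -
  assume "cls V E ends p = cls V E ends q" "q \<in> V"
  moreover have "q \<in> V \<Longrightarrow> q \<in> cls V E ends q" by (simp add: cls_def)
  ultimately have "q \<in> cls V E ends p" by simp
  then show ?thesis by (simp add: cls_def)
qed

lemma conn_insert_same:
  assumes "conn E ends (fst (ends e)) (snd (ends e))"
  shows "conn (insert e E) ends = conn E ends"
proof -
  have "(mg_adj (insert e E) ends)\<^sup>* = (mg_adj E ends)\<^sup>*"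
  proof (rule rtrancl_subset)
    show "mg_adj E ends \<subseteq> mg_adj (insert e E) ends" unfolding adj_insert by auto
    show "mg_adj (insert e E) ends \<subseteq> (mg_adj E ends)\<^sup>*"
      unfolding adj_insert using assms conn_sym[OF assms] unfolding conn_def by auto
  qed
  then show ?thesis unfolding conn_def by (intro ext) simp
qed

lemma comp_insert_same:
  assumes "conn E ends (fst (ends e)) (snd (ends e))"
  shows "num_components V (insert e E) ends = num_components V E ends"
  unfolding num_components_cls cls_def conn_insert_same[OF assms] ..

lemma conn_insert_cases:
  assumes "conn (insert e E) ends p q"
  defines "u \<equiv> fst (ends e)" and "v \<equiv> snd (ends e)"
  shows "conn E ends p q \<or> ((conn E ends p u \<or> conn E ends p v) \<and> (conn E ends u q \<or> conn E ends v q))"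
  using assms(1) unfolding conn_def[of "insert e E"]
proof (induct rule: rtrancl_induct)
  case base then show ?case by simp
next
  case (step r q)
  from step(2) have "(r, q) \<in> mg_adj E ends \<or> (r = u \<and> q = v) \<or> (r = v \<and> q = u)"
    unfolding adj_insert u_def v_def by (cases "ends e") auto
  then consider "(r, q) \<in> mg_adj E ends" | "r = u" "q = v" | "r = v" "q = u" by blast
  then show ?case
  proof cases
    case 1
    then have c: "conn E ends r q" unfolding conn_def by simp
    from step(3) show ?thesis
    proof
      assume "conn E ends p r" then show ?thesis using c conn_trans by metis
    next
      assume h: "(conn E ends p u \<or> conn E ends p v) \<and> (conn E ends u r \<or> conn E ends v r)"
      then have "conn E ends u q \<or> conn E ends v q" using c conn_trans by metis
      then show ?thesis using h by simp
    qed
  next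
    case 2
    have "conn E ends p u \<or> conn E ends p v" using step(3) 2 by auto
    moreover have "conn E ends v q" using 2 by simp
    ultimately show ?thesis by simp
  next
    case 3
    have "conn E ends p u \<or> conn E ends p v" using step(3) 3 by auto
    moreover have "conn E ends u q" using 3 by simp
    ultimately show ?thesis by simp
  qed
qed

lemma card_le_diff1: "finite A \<Longrightarrow> card A \<le> card (A - {a}) + 1"
  by (cases "a \<in> A") (simp_all add: card_Diff_singleton_if)

lemma comp_insert_le:
  assumes finV: "finite V" and uV: "fst (ends e) \<in> V" and vV: "snd (ends e) \<in> V"
  shows "num_components V E ends \<le> num_components V (insert e E) ends + 1"
proof -
  define u where "u = fst (ends e)"
  define v where "v = snd (ends e)"
  let ?F = "cls V E ends" and ?F' = "cls V (insert e E) ends"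
  have sub: "\<And>p q. conn E ends p q \<Longrightarrow> conn (insert e E) ends p q"
  proof -
    fix p q assume a: "conn E ends p q"
    have "mg_adj E ends \<subseteq> mg_adj (insert e E) ends" unfolding adj_insert by (rule Un_upper1)
    then have "(mg_adj E ends)\<^sup>* \<subseteq> (mg_adj (insert e E) ends)\<^sup>*" by (rule rtrancl_mono)
    then show "conn (insert e E) ends p q" using a unfolding conn_def by (rule subsetD)
  qed
  define G where "G = (\<lambda>C. {q \<in> V. \<exists>p\<in>C. conn (insert e E) ends p q})"
  have GF: "\<And>p. p \<in> V \<Longrightarrow> G (?F p) = ?F' p"
  proof -
    fix p assume pV: "p \<in> V"
    show "G (?F p) = ?F' p" unfolding G_def cls_def
    proof (intro set_eqI iffI)
      fix q assume "q \<in> {q \<in> V. \<exists>p'\<in>{q \<in> V. conn E ends p q}. conn (insert e E) ends p' q}"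
      then obtain p' where "q \<in> V" "conn E ends p p'" "conn (insert e E) ends p' q" by auto
      then show "q \<in> {q \<in> V. conn (insert e E) ends p q}" using conn_trans[OF sub] by simp
    next
      fix q show "q \<in> {q \<in> V. conn (insert e E) ends p q} \<Longrightarrow> q \<in> {q \<in> V. \<exists>p'\<in>{q \<in> V. conn E ends p q}. conn (insert e E) ends p' q}"
      proof -
        assume "q \<in> {q \<in> V. conn (insert e E) ends p q}"
        then have "q \<in> V" "conn (insert e E) ends p q" by simp_all
        moreover have "p \<in> {q \<in> V. conn E ends p q}" using pV by simp
        ultimately show ?thesis by blast
      qed
    qed
  qed
  have inj: "inj_on G (?F ` V - {?F v})"
  proof (rule inj_onI)
    fix C1 C2 assume C1: "C1 \<in> ?F ` V - {?F v}" and C2: "C2 \<in> ?F ` V - {?F v}" and eq: "G C1 = G C2"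
    obtain p where p: "p \<in> V" "C1 = ?F p" using C1 by auto
    obtain q where q: "q \<in> V" "C2 = ?F q" using C2 by auto
    have "?F' p = ?F' q" using eq p q GF by simp
    then have c: "conn (insert e E) ends p q" using cls_eqD q by metis
    have npv: "\<not> conn E ends p v"
    proof
      assume "conn E ends p v" then have "?F p = ?F v" by (rule cls_eq)
      with C1 p show False by simp
    qed
    have nqv: "\<not> conn E ends v q"
    proof
      assume "conn E ends v q" then have "conn E ends q v" by (rule conn_sym)
      then have "?F q = ?F v" by (rule cls_eq)
      with C2 q show False by simp
    qed
    from conn_insert_cases[OF c, folded u_def v_def] npv nqv
    have "conn E ends p q \<or> (conn E ends p u \<and> conn E ends u q)" by simp
    then have "conn E ends p q" using conn_trans by metis
    then have "?F p = ?F q" by (rule cls_eq)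
    then show "C1 = C2" using p q by simp
  qed
  have "G ` (?F ` V - {?F v}) \<subseteq> ?F' ` V"
  proof
    fix C assume "C \<in> G ` (?F ` V - {?F v})"
    then obtain p where "p \<in> V" "C = G (?F p)" by blast
    then show "C \<in> ?F' ` V" using GF by simp
  qed
  then have "card (?F ` V - {?F v}) \<le> card (?F' ` V)"
    by (rule card_inj_on_le[OF inj]) (simp add: finV)
  moreover have "card (?F ` V) \<le> card (?F ` V - {?F v}) + 1"
    using finV by (intro card_le_diff1) simp
  ultimately have "card (?F ` V) \<le> card (?F' ` V) + 1" by linarith
  then show ?thesis unfolding num_components_cls .
qed




lemma flip_transpose: "dart_flip (Transposition.transpose p q z) =
   Transposition.transpose (dart_flip p) (dart_flip q) (dart_flip z)"
proof -
  have e: "\<And>a b. dart_flip a = dart_flip b \<longleftrightarrow> a = b" by (metis flip_flip)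
  show ?thesis by (simp add: transpose_def e)
qed

lemma transpose_vert:
  assumes "vt p = vt q" shows "vt (Transposition.transpose p q z) = vt z"
  using assms by (simp add: transpose_def)

locale INS =
  fixes E :: "'e set" and ends :: "'e \<Rightarrow> 'v \<times> 'v" and e :: 'e
  assumes finE: "finite E" and eE: "e \<notin> E"
begin

abbreviation "x \<equiv> (e, True)"
abbreviation "y \<equiv> (e, False)"
abbreviation "D \<equiv> mg_darts E"
abbreviation "D' \<equiv> mg_darts (insert e E)"
abbreviation "vt \<equiv> dart_vertex ends"
abbreviation "u \<equiv> fst (ends e)"
abbreviation "v \<equiv> snd (ends e)"

lemma xD: "x \<notin> D" and yD: "y \<notin> D" using eE by (auto simp: mg_darts_def)
lemma D'_eq: "D' = D \<union> {x, y}" by (rule darts_insert)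
lemma xD': "x \<in> D'" and yD': "y \<in> D'" by (auto simp: mg_darts_def)
lemma DD': "D \<subseteq> D'" by (auto simp: mg_darts_def)
lemma finD: "finite D" and finD': "finite D'" using finE by (simp_all add: finite_darts)
lemma vt_x: "vt x = u" and vt_y: "vt y = v" by (simp_all add: dart_vertex_def)
lemma flip_x: "dart_flip x = y" and flip_y: "dart_flip y = x" by (simp_all add: dart_flip_def)
lemma xy: "x \<noteq> y" by simp
lemma D_diff: "D = D' - {x, y}" using D'_eq xD yD by auto

lemma rot_fix:
  assumes "rotation_system E ends \<sigma>" shows "\<sigma> x = x" "\<sigma> y = y"
  using rot_perm[OF assms] xD yD by (simp_all add: permutes_not_in)

lemma rot_perm':
  assumes "rotation_system E ends \<sigma>" shows "\<sigma> permutes D'"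
  using rot_perm[OF assms] DD' by (rule permutes_subset)

lemma rot_vert:
  assumes "rotation_system E ends \<sigma>" "d \<in> D'" shows "vt (\<sigma> d) = vt d"
proof (cases "d \<in> D")
  case True
  have "\<sigma> d \<in> orbit \<sigma> d" by (rule orbit.base)
  then show ?thesis using rot_orbit[OF assms(1) True] by simp
next
  case False then have "d = x \<or> d = y" using assms(2) D'_eq by auto
  then show ?thesis using rot_fix[OF assms(1)] by auto
qed

lemma orbit_vert:
  assumes "f permutes S" "\<And>z. z \<in> S \<Longrightarrow> vt (f z) = vt z" "d \<in> S" "d' \<in> orbit f d"
  shows "vt d' = vt d \<and> d' \<in> S"
  using assms(4)
proof induct
  case base then show ?case using assms permutes_in_image by metis
next
  case (step z) then show ?case using assms permutes_in_image by metis
qed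

lemma rot_add:
  assumes rot: "rotation_system E ends \<sigma>"
    and A: "(\<alpha> \<in> D \<and> vt \<alpha> = u) \<or> (\<alpha> = x \<and> (\<forall>d\<in>D. vt d \<noteq> u))"
    and B: "(\<beta> \<in> D \<union> {x} \<and> vt \<beta> = v) \<or> (\<beta> = y \<and> (\<forall>d\<in>D \<union> {x}. vt d \<noteq> v))"
  shows "rotation_system (insert e E) ends (\<sigma> \<circ> Transposition.transpose y \<beta> \<circ> Transposition.transpose x \<alpha>)"
proof -
  have aD': "\<alpha> \<in> D'" and bD': "\<beta> \<in> D'" using A B DD' xD' yD' by auto
  have ay: "\<alpha> \<noteq> y \<or> \<beta> \<noteq> x" using A yD by auto
  interpret T: TM \<sigma> D' x y \<alpha> \<beta>
    by unfold_locales (use rot_perm'[OF rot] finD' xD' yD' rot_fix[OF rot] aD' bD' ay in auto)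
  have tau: "T.\<tau>' = \<sigma> \<circ> Transposition.transpose y \<beta> \<circ> Transposition.transpose x \<alpha>"
    by (simp add: T.\<tau>'_def T.\<tau>1_def)
  have vta: "vt \<alpha> = vt x" using A vt_x by auto
  have vtb: "vt \<beta> = vt y" using B vt_y vt_x by auto
  have pres: "\<And>z. z \<in> D' \<Longrightarrow> vt (T.\<tau>' z) = vt z"
  proof -
    fix z assume z: "z \<in> D'"
    let ?w = "Transposition.transpose y \<beta> (Transposition.transpose x \<alpha> z)"
    have w: "?w \<in> D'" using z aD' bD' xD' yD' by (simp add: transpose_def)
    have "vt (T.\<tau>' z) = vt (\<sigma> ?w)" by (simp add: tau)
    also have "\<dots> = vt ?w" using rot_vert[OF rot w] .
    also have "\<dots> = vt z" using transpose_vert[of vt, OF vtb[symmetric]] transpose_vert[of vt, OF vta[symmetric]]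
      by (simp add: transpose_commute)
    finally show "vt (T.\<tau>' z) = vt z" .
  qed
  note perm' = T.t'_perm
  have refl': "\<And>z. z \<in> D' \<Longrightarrow> z \<in> orbit T.\<tau>' z" using perm_self_in_orbit[OF perm' finD'] .
  have sym': "\<And>a b. a \<in> D' \<Longrightarrow> b \<in> orbit T.\<tau>' a \<Longrightarrow> a \<in> orbit T.\<tau>' b"
    using perm_orbit_sym[OF perm' finD'] .
  have trans': "\<And>a b c. b \<in> orbit T.\<tau>' a \<Longrightarrow> c \<in> orbit T.\<tau>' b \<Longrightarrow> c \<in> orbit T.\<tau>' a"
    using orbit_trans by metis
  have rotD: "\<And>d d'. d \<in> D \<Longrightarrow> d' \<in> D \<Longrightarrow> vt d' = vt d \<Longrightarrow> d' \<in> orbit T.\<tau>' d"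
  proof -
    fix d d' assume "d \<in> D" "d' \<in> D" "vt d' = vt d"
    then have "d' \<in> orbit \<sigma> d" using rot_orbit[OF rot] by auto
    moreover have "d \<in> D'" using \<open>d \<in> D\<close> DD' by auto
    ultimately show "d' \<in> orbit T.\<tau>' d" by (rule T.coarsen)
  qed
  have C1: "\<And>d. d \<in> D \<Longrightarrow> vt d = u \<Longrightarrow> x \<in> orbit T.\<tau>' d"
  proof -
    fix d assume d: "d \<in> D" "vt d = u"
    then have a: "\<alpha> \<in> D" "vt \<alpha> = u" using A by auto
    then have "\<alpha> \<noteq> x" using xD by auto
    then have "\<alpha> \<in> orbit T.\<tau>' x" by (rule T.join_x)
    then have "x \<in> orbit T.\<tau>' \<alpha>" using sym' xD' by blast
    moreover have "\<alpha> \<in> orbit T.\<tau>' d" using rotD d a by auto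
    ultimately show "x \<in> orbit T.\<tau>' d" using trans' by blast
  qed
  have C2: "\<And>d. d \<in> D \<Longrightarrow> vt d = v \<Longrightarrow> y \<in> orbit T.\<tau>' d"
  proof -
    fix d assume d: "d \<in> D" "vt d = v"
    then have b: "\<beta> \<in> D \<union> {x}" "vt \<beta> = v" using B by auto
    then have "\<beta> \<noteq> y" using yD by auto
    then have "\<beta> \<in> orbit T.\<tau>' y" by (rule T.join_y)
    then have yb: "y \<in> orbit T.\<tau>' \<beta>" using sym' yD' by blast
    show "y \<in> orbit T.\<tau>' d"
    proof (cases "\<beta> = x")
      case True
      then have "vt d = u" using b d vt_x by simp
      then have "x \<in> orbit T.\<tau>' d" using C1 d by blast
      then show ?thesis using yb True trans' by blast
    next
      case False
      then have "\<beta> \<in> D" using b by simp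
      then have "\<beta> \<in> orbit T.\<tau>' d" using rotD d b by auto
      then show ?thesis using yb trans' by blast
    qed
  qed
  have C3: "u = v \<Longrightarrow> y \<in> orbit T.\<tau>' x"
  proof -
    assume uv: "u = v"
    have b: "\<beta> \<in> D \<union> {x}" "vt \<beta> = v" using B vt_x uv by auto
    then have "\<beta> \<noteq> y" using yD by auto
    then have "\<beta> \<in> orbit T.\<tau>' y" by (rule T.join_y)
    then have yb: "y \<in> orbit T.\<tau>' \<beta>" using sym' yD' by blast
    show ?thesis
    proof (cases "\<beta> = x")
      case True then show ?thesis using yb by simp
    next
      case False
      then have "\<beta> \<in> D" using b by simp
      then have "x \<in> orbit T.\<tau>' \<beta>" using C1 b uv by simp
      then have "\<beta> \<in> orbit T.\<tau>' x" using sym' \<open>\<beta> \<in> D\<close> DD' by blast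
      then show ?thesis using yb trans' by blast
    qed
  qed
  have main: "\<And>d. d \<in> D' \<Longrightarrow> orbit T.\<tau>' d = {d' \<in> D'. vt d' = vt d}"
  proof -
    fix d assume d: "d \<in> D'"
    show "orbit T.\<tau>' d = {d' \<in> D'. vt d' = vt d}"
    proof
      show "orbit T.\<tau>' d \<subseteq> {d' \<in> D'. vt d' = vt d}"
        using orbit_vert[OF perm' pres d] by blast
    next
      define c where "c = (if vt d = u then x else if vt d = v then y else d)"
      have K: "\<And>z. z \<in> D' \<Longrightarrow> vt z = vt d \<Longrightarrow> c \<in> orbit T.\<tau>' z"
      proof -
        fix z assume z: "z \<in> D'" "vt z = vt d"
        consider "z \<in> D" | "z = x" | "z = y" using z D'_eq by auto
        then show "c \<in> orbit T.\<tau>' z"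
        proof cases
          case 1
          show ?thesis
          proof (cases "vt d = u")
            case True then show ?thesis using C1 1 z c_def by simp
          next
            case False
            show ?thesis
            proof (cases "vt d = v")
              case True then show ?thesis using C2 1 z c_def False by simp
            next
              case False2: False
              then have "d \<in> D" using d D'_eq vt_x vt_y False by auto
              then show ?thesis using rotD 1 z c_def False False2 by simp
            qed
          qed
        next
          case 2 then show ?thesis using z c_def vt_x refl' xD' by simp
        next
          case 3
          show ?thesis
          proof (cases "vt d = u")
            case True
            then have "u = v" using 3 z vt_y by simp
            then have "y \<in> orbit T.\<tau>' x" by (rule C3)
            then have "x \<in> orbit T.\<tau>' y" using sym' xD' by blast
            then show ?thesis using True c_def 3 by simp
          next
            case False then show ?thesis using 3 z c_def vt_y refl' yD' by simp
          qed
        qed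
      qed
      show "{d' \<in> D'. vt d' = vt d} \<subseteq> orbit T.\<tau>' d"
      proof
        fix d' assume "d' \<in> {d' \<in> D'. vt d' = vt d}"
        then have d': "d' \<in> D'" "vt d' = vt d" by auto
        have c1: "c \<in> orbit T.\<tau>' d" using K d by simp
        have "c \<in> orbit T.\<tau>' d'" using K d' by simp
        then have "d' \<in> orbit T.\<tau>' c" using sym' d' by blast
        then show "d' \<in> orbit T.\<tau>' d" using c1 trans' by blast
      qed
    qed
  qed
  show ?thesis unfolding rotation_system_def using perm' main tau by simp
qed


lemma rot_del:
  assumes rot': "rotation_system (insert e E) ends \<sigma>'"
  obtains \<sigma> \<alpha> \<beta> where "rotation_system E ends \<sigma>"
    "\<sigma>' = \<sigma> \<circ> Transposition.transpose y \<beta> \<circ> Transposition.transpose x \<alpha>"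
    "\<alpha> \<in> D'" "\<beta> \<in> D'" "\<beta> \<noteq> x" "vt \<alpha> = u" "vt \<beta> = v"
    "\<beta> = y \<Longrightarrow> \<forall>d\<in>D. vt d \<noteq> v" "\<alpha> = x \<Longrightarrow> \<forall>d\<in>D. vt d \<noteq> u"
proof -
  have p': "\<sigma>' permutes D'" using rot_perm[OF rot'] .
  define \<alpha> where "\<alpha> = inv \<sigma>' x"
  define \<sigma>1 where "\<sigma>1 = \<sigma>' \<circ> Transposition.transpose x \<alpha>"
  define \<beta> where "\<beta> = inv \<sigma>1 y"
  define \<sigma> where "\<sigma> = \<sigma>1 \<circ> Transposition.transpose y \<beta>"
  have aD': "\<alpha> \<in> D'" unfolding \<alpha>_def using permutes_in_image[OF permutes_inv[OF p']] xD' by simp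
  have sa: "\<sigma>' \<alpha> = x" unfolding \<alpha>_def using permutes_inverses(1)[OF p'] by simp
  have p1: "\<sigma>1 permutes D'" unfolding \<sigma>1_def
    by (rule permutes_compose[OF _ p']) (simp add: xD' aD' permutes_swap_id)
  have s1x: "\<sigma>1 x = x" unfolding \<sigma>1_def using sa by simp
  have bD': "\<beta> \<in> D'" unfolding \<beta>_def using permutes_in_image[OF permutes_inv[OF p1]] yD' by simp
  have sb: "\<sigma>1 \<beta> = y" unfolding \<beta>_def using permutes_inverses(1)[OF p1] by simp
  have bx: "\<beta> \<noteq> x" using sb s1x by auto
  have p: "\<sigma> permutes D'" unfolding \<sigma>_def
    by (rule permutes_compose[OF _ p1]) (simp add: yD' bD' permutes_swap_id)
  have sx: "\<sigma> x = x" unfolding \<sigma>_def using s1x bx by simp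
  have sy: "\<sigma> y = y" unfolding \<sigma>_def using sb by simp
  have eq1: "\<sigma> \<circ> Transposition.transpose y \<beta> = \<sigma>1" unfolding \<sigma>_def by (simp add: comp_assoc)
  have eq: "\<sigma>' = \<sigma> \<circ> Transposition.transpose y \<beta> \<circ> Transposition.transpose x \<alpha>"
    unfolding eq1 \<sigma>1_def by (simp add: comp_assoc)
  interpret T: TM \<sigma> D' x y \<alpha> \<beta>
    by unfold_locales (use p finD' xD' yD' sx sy aD' bD' bx in auto)
  have tau: "T.\<tau>' = \<sigma>'" using eq by (simp add: T.\<tau>'_def T.\<tau>1_def)
  have pD: "\<sigma> permutes D"
    by (rule permutes_superset[OF p]) (use D'_eq sx sy in auto)
  have rot: "rotation_system E ends \<sigma>"
    unfolding rotation_system_def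
  proof (intro conjI pD ballI)
    fix d assume d: "d \<in> D"
    then have d2: "d \<in> D' - {x, y}" using D_diff by simp
    have "orbit \<sigma> d = orbit \<sigma>' d - {x, y}" using T.refine[OF d2] tau by simp
    also have "\<dots> = {d' \<in> D'. vt d' = vt d} - {x, y}" using rot_orbit[OF rot'] d2 by simp
    also have "\<dots> = {d' \<in> D. vt d' = vt d}" using D_diff by auto
    finally show "orbit \<sigma> d = {d' \<in> D. vt d' = vt d}" .
  qed
  have vtx: "\<And>z. z \<in> orbit \<sigma>' x \<Longrightarrow> vt z = u" using rot_orbit[OF rot' xD'] vt_x by auto
  have perm_s': "permutation \<sigma>'" using p' finD' permutation_permutes by blast
  have "\<alpha> \<in> orbit (inv \<sigma>') x" unfolding \<alpha>_def by (rule orbit.base)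
  then have "\<alpha> \<in> orbit \<sigma>' x" using orbit_inv_eq[OF perm_s'] by simp
  then have vta: "vt \<alpha> = u" using vtx by simp
  have pres1: "\<And>z. z \<in> D' \<Longrightarrow> vt (\<sigma>1 z) = vt z"
  proof -
    fix z assume z: "z \<in> D'"
    have w: "Transposition.transpose x \<alpha> z \<in> D'" using z aD' xD' by (simp add: transpose_def)
    have "vt (\<sigma>' (Transposition.transpose x \<alpha> z)) = vt (Transposition.transpose x \<alpha> z)"
    proof -
      have "\<sigma>' (Transposition.transpose x \<alpha> z) \<in> orbit \<sigma>' (Transposition.transpose x \<alpha> z)" by (rule orbit.base)
      then show ?thesis using rot_orbit[OF rot' w] by simp
    qed
    also have "\<dots> = vt z" using transpose_vert[of vt x \<alpha>] vta vt_x by simp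
    finally show "vt (\<sigma>1 z) = vt z" by (simp add: \<sigma>1_def)
  qed
  have perm_1: "permutation \<sigma>1" using p1 finD' permutation_permutes by blast
  have "\<beta> \<in> orbit (inv \<sigma>1) y" unfolding \<beta>_def by (rule orbit.base)
  then have "\<beta> \<in> orbit \<sigma>1 y" using orbit_inv_eq[OF perm_1] by simp
  then have vtb: "vt \<beta> = v" using orbit_vert[OF p1 pres1 yD'] vt_y by auto
  have by_: "\<beta> = y \<Longrightarrow> \<forall>d\<in>D. vt d \<noteq> v"
  proof (intro ballI notI)
    fix d assume b: "\<beta> = y" and d: "d \<in> D" "vt d = v"
    have "d \<in> orbit \<sigma>' y" using rot_orbit[OF rot' yD'] d DD' vt_y by auto
    then show False using T.b_y_orbit[OF b] tau d xD yD by auto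
  qed
  have ax_: "\<alpha> = x \<Longrightarrow> \<forall>d\<in>D. vt d \<noteq> u"
  proof (intro ballI notI)
    fix d assume a: "\<alpha> = x" and d: "d \<in> D" "vt d = u"
    have "d \<in> orbit \<sigma>' x" using rot_orbit[OF rot' xD'] d DD' vt_x by auto
    then show False using T.a_x_orbit[OF a] tau d xD yD by auto
  qed
  show ?thesis using that[OF rot eq aD' bD' bx vta vtb by_ ax_] .
qed

lemma fperm_ins:
  assumes "\<alpha> \<in> D'" "\<beta> \<in> D'"
  shows "fperm (\<sigma> \<circ> Transposition.transpose y \<beta> \<circ> Transposition.transpose x \<alpha>) (insert e E) =
    fperm \<sigma> (insert e E) \<circ> Transposition.transpose x (dart_flip \<beta>) \<circ> Transposition.transpose y (dart_flip \<alpha>)"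
proof
  fix z
  have fa: "dart_flip \<alpha> \<in> D'" "dart_flip \<beta> \<in> D'" using assms by simp_all
  show "fperm (\<sigma> \<circ> Transposition.transpose y \<beta> \<circ> Transposition.transpose x \<alpha>) (insert e E) z =
    (fperm \<sigma> (insert e E) \<circ> Transposition.transpose x (dart_flip \<beta>) \<circ> Transposition.transpose y (dart_flip \<alpha>)) z"
  proof (cases "z \<in> D'")
    case False
    then have "Transposition.transpose y (dart_flip \<alpha>) z = z" using fa yD' by (auto simp: transpose_def)
    moreover have "Transposition.transpose x (dart_flip \<beta>) z = z" using fa xD' False by (auto simp: transpose_def)
    ultimately show ?thesis using False by (simp add: fperm_def)
  next
    case True
    let ?w = "Transposition.transpose x (dart_flip \<beta>) (Transposition.transpose y (dart_flip \<alpha>) z)"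
    have w: "?w \<in> D'" using True fa xD' yD' by (simp add: transpose_def)
    have "dart_flip ?w = Transposition.transpose y \<beta> (Transposition.transpose x \<alpha> (dart_flip z))"
      by (simp add: flip_transpose flip_x flip_y)
    then show ?thesis using True w by (simp add: fperm_def)
  qed
qed

lemma cyc_ins:
  assumes rot: "rotation_system E ends \<sigma>"
  shows "cyc (fperm \<sigma> (insert e E)) D' = cyc (fperm \<sigma> E) D + 1"
proof -
  let ?f = "fperm \<sigma> (insert e E)" and ?g = "fperm \<sigma> E"
  have pD: "\<sigma> permutes D" using rot_perm[OF rot] .
  have gp: "?g permutes D" by (rule fperm_perm[OF pD])
  have same: "\<And>d. d \<in> D \<Longrightarrow> orbit ?f d = orbit ?g d"
  proof -
    fix d assume d: "d \<in> D"
    show "orbit ?f d = orbit ?g d"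
    proof (rule orbit_cong0[OF d])
      show "?f \<in> D \<rightarrow> D" using permutes_in_image[OF pD] DD' by (auto simp: fperm_def)
      show "\<And>z. z \<in> D \<Longrightarrow> ?f z = ?g z" using DD' by (auto simp: fperm_def)
    qed
  qed
  have fx: "?f x = y" and fy: "?f y = x" using rot_fix[OF rot] xD' yD' by (simp_all add: fperm_def flip_x flip_y)
  have ox: "orbit ?f x = {x, y}"
  proof
    show "orbit ?f x \<subseteq> {x, y}"
    proof
      fix z assume "z \<in> orbit ?f x" then show "z \<in> {x, y}"
        by induct (auto simp: fx fy)
    qed
    have "y \<in> orbit ?f x" using fx by (metis orbit.base)
    moreover then have "x \<in> orbit ?f x" using fy by (metis orbit.step)
    ultimately show "{x, y} \<subseteq> orbit ?f x" by simp
  qed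
  have oy: "orbit ?f y = {x, y}"
  proof
    show "orbit ?f y \<subseteq> {x, y}"
    proof
      fix z assume "z \<in> orbit ?f y" then show "z \<in> {x, y}"
        by induct (auto simp: fx fy)
    qed
    have "x \<in> orbit ?f y" using fy by (metis orbit.base)
    moreover then have "y \<in> orbit ?f y" using fx by (metis orbit.step)
    ultimately show "{x, y} \<subseteq> orbit ?f y" by simp
  qed
  have img: "(\<lambda>d. orbit ?f d) ` D' = (\<lambda>d. orbit ?g d) ` D \<union> {{x, y}}"
    using same ox oy D'_eq by auto
  have notin: "{x, y} \<notin> (\<lambda>d. orbit ?g d) ` D"
  proof
    assume "{x, y} \<in> (\<lambda>d. orbit ?g d) ` D"
    then obtain d where "d \<in> D" "{x, y} = orbit ?g d" by auto
    then have "x \<in> D" using permutes_orbit_subset[OF gp] by blast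
    then show False using xD by simp
  qed
  show ?thesis unfolding cyc_def img using notin finD by simp
qed

end




definition gterm :: "'v set \<Rightarrow> 'e set \<Rightarrow> ('e \<Rightarrow> 'v \<times> 'v) \<Rightarrow> ('e \<times> bool \<Rightarrow> 'e \<times> bool) \<Rightarrow> int" where
  "gterm V E ends \<sigma> = 2 * int (num_components V E ends) - int (card V) + int (card E) - int (num_faces V E ends \<sigma>)"

lemma rotation_genus_gterm: "rotation_genus V E ends \<sigma> = nat (gterm V E ends \<sigma> div 2)"
  by (simp add: rotation_genus_def gterm_def)

lemma cyc_transpose_le:
  assumes "f permutes S" "finite S" "p \<in> S" "q \<in> S"
  shows "cyc (f \<circ> Transposition.transpose p q) S \<le> cyc f S + 1"
proof (cases "p = q")
  case True then show ?thesis by simp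
next
  case False
  show ?thesis
  proof (cases "q \<in> orbit f p")
    case True then show ?thesis using split_cyc[OF assms False] by simp
  next
    case nq: False then show ?thesis using merge_cyc[OF assms nq] by simp
  qed
qed

lemma card_iso_le: "finite V \<Longrightarrow> card (isolated_vertices V (insert e E) ends) \<le> card (isolated_vertices V E ends)"
  unfolding iso_insert by (rule card_mono) (auto simp: isolated_vertices_def)

lemma finite_iso: "finite V \<Longrightarrow> finite (isolated_vertices V E ends)"
  by (simp add: isolated_vertices_def)

lemma card_diff1': "finite A \<Longrightarrow> card (A - {u}) + (if u \<in> A then 1 else 0) = card A"
  using card.remove[of A u] by auto

lemma card_diff2: "finite A \<Longrightarrow> u \<noteq> v \<Longrightarrow>
   card (A - {u, v}) + (if u \<in> A then 1 else 0) + (if v \<in> A then 1 else 0) = card A"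
proof -
  assume f: "finite A" and uv: "u \<noteq> v"
  have "A - {u, v} = (A - {u}) - {v}" by auto
  moreover have "card ((A - {u}) - {v}) + (if v \<in> A - {u} then 1 else 0) = card (A - {u})"
    using f by (intro card_diff1') simp
  moreover have "card (A - {u}) + (if u \<in> A then 1 else 0) = card A" using f by (rule card_diff1')
  moreover have "(v \<in> A - {u}) = (v \<in> A)" using uv by auto
  ultimately show ?thesis by simp
qed

context INS
begin

lemma ox_ins: assumes "rotation_system E ends \<sigma>"
  shows "orbit (fperm \<sigma> (insert e E)) x = {x, y}" "orbit (fperm \<sigma> (insert e E)) y = {x, y}"
proof -
  let ?f = "fperm \<sigma> (insert e E)"
  have fx: "?f x = y" and fy: "?f y = x" using rot_fix[OF assms] xD' yD' by (simp_all add: fperm_def flip_x flip_y)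
  show "orbit ?f x = {x, y}"
  proof
    show "orbit ?f x \<subseteq> {x, y}"
    proof
      fix z assume "z \<in> orbit ?f x" then show "z \<in> {x, y}"
        by induct (auto simp: fx fy)
    qed
    have "y \<in> orbit ?f x" using fx by (metis orbit.base)
    moreover then have "x \<in> orbit ?f x" using fy by (metis orbit.step)
    ultimately show "{x, y} \<subseteq> orbit ?f x" by simp
  qed
  show "orbit ?f y = {x, y}"
  proof
    show "orbit ?f y \<subseteq> {x, y}"
    proof
      fix z assume "z \<in> orbit ?f y" then show "z \<in> {x, y}"
        by induct (auto simp: fx fy)
    qed
    have "x \<in> orbit ?f y" using fy by (metis orbit.base)
    moreover then have "y \<in> orbit ?f y" using fx by (metis orbit.step)
    ultimately show "{x, y} \<subseteq> orbit ?f y" by simp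
  qed
qed

lemma faces_eq:
  assumes "rotation_system E ends \<sigma>"
  shows "num_faces V E ends \<sigma> + 1 = cyc (fperm \<sigma> (insert e E)) D' + card (isolated_vertices V E ends)"
  using num_faces_cyc[OF rot_perm[OF assms]] cyc_ins[OF assms] by simp

lemma faces_eq':
  assumes "rotation_system (insert e E) ends \<sigma>'"
  shows "num_faces V (insert e E) ends \<sigma>' = cyc (fperm \<sigma>' (insert e E)) D' + card (isolated_vertices V (insert e E) ends)"
  by (rule num_faces_cyc[OF rot_perm[OF assms]])

lemma card_ins: "card (insert e E) = card E + 1"
  using finE eE by simp

lemma gterm_add:
  assumes finV: "finite V" and rot: "rotation_system E ends \<sigma>"
    and par: "(\<exists>e0\<in>E. ends e0 = ends e) \<or> (u = v \<and> u \<in> V)"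
  shows "\<exists>\<sigma>'. rotation_system (insert e E) ends \<sigma>' \<and> gterm V (insert e E) ends \<sigma>' \<le> gterm V E ends \<sigma>"
proof -
  have cuv: "conn E ends u v"
  proof (cases "\<exists>e0\<in>E. ends e0 = ends e")
    case True
    then obtain e0 where "e0 \<in> E" "ends e0 = ends e" by auto
    then have "(u, v) \<in> mg_adj E ends" unfolding mg_adj_def by (metis (mono_tags, lifting) UnI1 mem_Collect_eq)
    then show ?thesis unfolding conn_def by (simp add: r_into_rtrancl)
  next
    case False then show ?thesis using par by simp
  qed
  have comp: "num_components V (insert e E) ends = num_components V E ends"
    using comp_insert_same[OF cuv] .
  let ?\<phi> = "fperm \<sigma> (insert e E)"
  have p': "\<sigma> permutes D'" using rot_perm'[OF rot] .
  have pD: "\<sigma> permutes D" using rot_perm[OF rot] .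
  have ph: "?\<phi> permutes D'" using fperm_perm[OF p'] .
  note F = faces_eq[OF rot, of V]
  have key: "\<exists>\<sigma>'. rotation_system (insert e E) ends \<sigma>' \<and>
     num_faces V (insert e E) ends \<sigma>' \<ge> num_faces V E ends \<sigma> + 1"
  proof (cases "\<exists>e0\<in>E. ends e0 = ends e")
    case True
    then obtain e0 where e0: "e0 \<in> E" "ends e0 = ends e" by auto
    define x0 where "x0 = (e0, True)"
    define y0 where "y0 = (e0, False)"
    have x0D: "x0 \<in> D" and y0D: "y0 \<in> D" using e0 by (simp_all add: x0_def y0_def in_darts)
    have vx0: "vt x0 = u" and vy0: "vt y0 = v" using e0 by (simp_all add: x0_def y0_def dart_vertex_def)
    define \<beta> where "\<beta> = inv \<sigma> y0"
    have perm_s: "permutation \<sigma>" using pD finD permutation_permutes by blast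
    have "\<beta> \<in> orbit (inv \<sigma>) y0" unfolding \<beta>_def by (rule orbit.base)
    then have bo: "\<beta> \<in> orbit \<sigma> y0" using orbit_inv_eq[OF perm_s] by simp
    then have bD: "\<beta> \<in> D" and vb: "vt \<beta> = v" using rot_orbit[OF rot y0D] vy0 by auto
    have sb: "\<sigma> \<beta> = y0" unfolding \<beta>_def using permutes_inverses(1)[OF pD] by simp
    define \<sigma>' where "\<sigma>' = \<sigma> \<circ> Transposition.transpose y \<beta> \<circ> Transposition.transpose x x0"
    have rot': "rotation_system (insert e E) ends \<sigma>'"
      unfolding \<sigma>'_def by (rule rot_add[OF rot]) (use x0D vx0 bD vb in auto)
    have fe: "fperm \<sigma>' (insert e E) = ?\<phi> \<circ> Transposition.transpose x (dart_flip \<beta>) \<circ> Transposition.transpose y y0"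
    proof -
      have "x0 \<in> D'" "\<beta> \<in> D'" using x0D bD DD' by auto
      moreover have "dart_flip x0 = y0" by (simp add: x0_def y0_def dart_flip_def)
      ultimately show ?thesis unfolding \<sigma>'_def using fperm_ins[of x0 \<beta> \<sigma>] by simp
    qed
    let ?b = "dart_flip \<beta>"
    let ?\<psi> = "?\<phi> \<circ> Transposition.transpose x ?b"
    have bD2: "?b \<in> D" using bD by simp
    have bD2': "?b \<in> D'" using bD2 DD' by blast
    have "?b \<noteq> x" "?b \<noteq> y" using bD2 xD yD by metis+
    then have nb: "?b \<notin> orbit ?\<phi> x" unfolding ox_ins(1)[OF rot] by simp
    note M = merge_orbit[OF ph finD' xD' bD2' nb]
    have c1: "cyc ?\<psi> D' + 1 = cyc ?\<phi> D'" using merge_cyc[OF ph finD' xD' bD2' nb] .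
    have pb: "?\<phi> ?b = y0" using bD2' sb by (simp add: fperm_def)
    have "y0 \<in> orbit ?\<phi> ?b" using pb by (metis orbit.base)
    then have y0o: "y0 \<in> orbit ?\<psi> x" using M(2) by blast
    have "y \<in> orbit ?\<psi> x" using M(2) ox_ins(1)[OF rot] by blast
    then have "orbit ?\<psi> y = orbit ?\<psi> x" using perm_orbit_same[OF M(1) finD'] by blast
    then have y0y: "y0 \<in> orbit ?\<psi> y" using y0o by simp
    have y0D': "y0 \<in> D'" using y0D DD' by blast
    have "y \<noteq> y0" using y0D yD by metis
    then have c2: "cyc (?\<psi> \<circ> Transposition.transpose y y0) D' = cyc ?\<psi> D' + 1"
      using split_cyc[OF M(1) finD' yD' y0D' _ y0y] by blast
    have iso: "isolated_vertices V (insert e E) ends = isolated_vertices V E ends"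
    proof -
      have "u \<notin> isolated_vertices V E ends" "v \<notin> isolated_vertices V E ends"
        using x0D y0D vx0 vy0 by (auto simp: isolated_vertices_def)
      then show ?thesis unfolding iso_insert by auto
    qed
    have "num_faces V (insert e E) ends \<sigma>' = cyc ?\<phi> D' + card (isolated_vertices V E ends)"
      using faces_eq'[OF rot', of V] fe c1 c2 iso by (simp add: comp_assoc)
    then show ?thesis using rot' F by auto
  next
    case False
    then have uv: "u = v" and uV: "u \<in> V" using par by auto
    show ?thesis
    proof (cases "\<exists>d\<in>D. vt d = u")
      case True
      then obtain d where d: "d \<in> D" "vt d = u" by auto
      define \<sigma>' where "\<sigma>' = \<sigma> \<circ> Transposition.transpose y x \<circ> Transposition.transpose x d"
      have rot': "rotation_system (insert e E) ends \<sigma>'"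
        unfolding \<sigma>'_def by (rule rot_add[OF rot]) (use d vt_x uv in auto)
      have fe: "fperm \<sigma>' (insert e E) = ?\<phi> \<circ> Transposition.transpose x y \<circ> Transposition.transpose y (dart_flip d)"
      proof -
        have "d \<in> D'" using d DD' by auto
        then show ?thesis unfolding \<sigma>'_def using fperm_ins[of d x \<sigma>] xD' by (simp add: flip_x)
      qed
      let ?\<psi> = "?\<phi> \<circ> Transposition.transpose x y"
      have yo: "y \<in> orbit ?\<phi> x" using ox_ins(1)[OF rot] by simp
      have c1: "cyc ?\<psi> D' = cyc ?\<phi> D' + 1" using split_cyc[OF ph finD' xD' yD' xy yo] .
      have pp: "?\<psi> permutes D'" by (rule permutes_compose[OF _ ph]) (simp add: xD' yD' permutes_swap_id)
      have "?\<psi> y = y" using rot_fix[OF rot] xD' by (simp add: fperm_def flip_x)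
      then have oy: "orbit ?\<psi> y = {y}" by (rule orbit_fixed)
      have fd: "dart_flip d \<in> D" using d by simp
      have fd': "dart_flip d \<in> D'" using fd DD' by blast
      have "dart_flip d \<noteq> y" using fd yD by metis
      then have nd: "dart_flip d \<notin> orbit ?\<psi> y" unfolding oy by simp
      have c2: "cyc (?\<psi> \<circ> Transposition.transpose y (dart_flip d)) D' + 1 = cyc ?\<psi> D'"
        using merge_cyc[OF pp finD' yD' fd' nd] .
      have iso: "isolated_vertices V (insert e E) ends = isolated_vertices V E ends"
      proof -
        have "u \<notin> isolated_vertices V E ends" using d unfolding isolated_vertices_def by blast
        then show ?thesis unfolding iso_insert using uv by simp
      qed
      have "num_faces V (insert e E) ends \<sigma>' = cyc ?\<phi> D' + card (isolated_vertices V E ends)"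
        using faces_eq'[OF rot', of V] fe c1 c2 iso by (simp add: comp_assoc)
      then show ?thesis using rot' F by auto
    next
      case False
      define \<sigma>' where "\<sigma>' = \<sigma> \<circ> Transposition.transpose y x \<circ> Transposition.transpose x x"
      have rot': "rotation_system (insert e E) ends \<sigma>'"
        unfolding \<sigma>'_def by (rule rot_add[OF rot]) (use False vt_x uv in auto)
      have fe: "fperm \<sigma>' (insert e E) = ?\<phi> \<circ> Transposition.transpose x y"
        unfolding \<sigma>'_def using fperm_ins[of x x \<sigma>] xD' by (simp add: flip_x)
      have yo: "y \<in> orbit ?\<phi> x" using ox_ins(1)[OF rot] by simp
      have c1: "cyc (?\<phi> \<circ> Transposition.transpose x y) D' = cyc ?\<phi> D' + 1"
        using split_cyc[OF ph finD' xD' yD' xy yo] .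
      have uI: "u \<in> isolated_vertices V E ends" using False uV by (auto simp: isolated_vertices_def)
      have iso: "isolated_vertices V (insert e E) ends = isolated_vertices V E ends - {u}"
        unfolding iso_insert using uv by auto
      have ci: "card (isolated_vertices V (insert e E) ends) + 1 = card (isolated_vertices V E ends)"
        unfolding iso using card.remove[OF finite_iso[OF finV] uI] by simp
      have "num_faces V (insert e E) ends \<sigma>' + 1 = cyc ?\<phi> D' + 1 + card (isolated_vertices V E ends)"
        using faces_eq'[OF rot', of V] fe c1 ci by simp
      then show ?thesis using rot' F by auto
    qed
  qed
  then obtain \<sigma>' where r: "rotation_system (insert e E) ends \<sigma>'"
    and f: "num_faces V (insert e E) ends \<sigma>' \<ge> num_faces V E ends \<sigma> + 1" by blast
  have "gterm V (insert e E) ends \<sigma>' \<le> gterm V E ends \<sigma>"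
    unfolding gterm_def comp card_ins using f by simp
  then show ?thesis using r by blast
qed


lemma gterm_del:
  assumes finV: "finite V" and uV: "u \<in> V" and vV: "v \<in> V"
    and rot': "rotation_system (insert e E) ends \<sigma>'"
  shows "\<exists>\<sigma>. rotation_system E ends \<sigma> \<and> gterm V E ends \<sigma> \<le> gterm V (insert e E) ends \<sigma>'"
proof -
  obtain \<sigma> \<alpha> \<beta> where rot: "rotation_system E ends \<sigma>"
    and eq: "\<sigma>' = \<sigma> \<circ> Transposition.transpose y \<beta> \<circ> Transposition.transpose x \<alpha>"
    and aD': "\<alpha> \<in> D'" and bD': "\<beta> \<in> D'" and bx: "\<beta> \<noteq> x" and vta: "vt \<alpha> = u" and vtb: "vt \<beta> = v"
    and by_: "\<beta> = y \<Longrightarrow> \<forall>d\<in>D. vt d \<noteq> v" and ax_: "\<alpha> = x \<Longrightarrow> \<forall>d\<in>D. vt d \<noteq> u"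
    using rot_del[OF rot'] by blast
  let ?\<phi> = "fperm \<sigma> (insert e E)"
  let ?a = "dart_flip \<alpha>" and ?b = "dart_flip \<beta>"
  let ?\<psi> = "?\<phi> \<circ> Transposition.transpose x ?b"
  let ?\<phi>' = "fperm \<sigma>' (insert e E)"
  have ph: "?\<phi> permutes D'" using fperm_perm[OF rot_perm'[OF rot]] .
  have fe: "?\<phi>' = ?\<psi> \<circ> Transposition.transpose y ?a"
    unfolding eq using fperm_ins[OF aD' bD'] by simp
  have aD'2: "?a \<in> D'" and bD'2: "?b \<in> D'" using aD' bD' by simp_all
  have pp: "?\<psi> permutes D'" by (rule permutes_compose[OF permutes_swap_id[OF xD' bD'2] ph])
  have F: "num_faces V E ends \<sigma> + 1 = cyc ?\<phi> D' + card (isolated_vertices V E ends)"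
    using faces_eq[OF rot] .
  have F': "num_faces V (insert e E) ends \<sigma>' = cyc ?\<phi>' D' + card (isolated_vertices V (insert e E) ends)"
    using faces_eq'[OF rot'] .
  have by2: "?b \<noteq> y" using bx by (metis flip_flip flip_y)
  have isoeq: "isolated_vertices V (insert e E) ends = isolated_vertices V E ends - {u, v}"
    by (rule iso_insert)
  have finI: "finite (isolated_vertices V E ends)" by (rule finite_iso[OF finV])
  have vI: "\<beta> = y \<Longrightarrow> v \<in> isolated_vertices V E ends"
    using by_ vV unfolding isolated_vertices_def by blast
  have uI: "\<alpha> = x \<Longrightarrow> u \<in> isolated_vertices V E ends"
    using ax_ uV unfolding isolated_vertices_def by blast
  have key: "2 * int (num_components V E ends) - int (num_faces V E ends \<sigma>) \<le>
     2 * int (num_components V (insert e E) ends) + 1 - int (num_faces V (insert e E) ends \<sigma>')"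
  proof (cases "conn E ends u v")
    case True
    have comp: "num_components V (insert e E) ends = num_components V E ends"
      using comp_insert_same[OF True] .
    have c2: "cyc ?\<phi>' D' \<le> cyc ?\<psi> D' + 1"
      unfolding fe by (rule cyc_transpose_le[OF pp finD' yD' aD'2])
    have "cyc ?\<phi>' D' + card (isolated_vertices V (insert e E) ends) \<le> cyc ?\<phi> D' + card (isolated_vertices V E ends)"
    proof (cases "\<beta> = y")
      case True
      then have "?b = x" by (simp add: flip_y)
      then have "?\<psi> = ?\<phi>" by simp
      moreover have "card (isolated_vertices V (insert e E) ends) + 1 \<le> card (isolated_vertices V E ends)"
      proof -
        have "isolated_vertices V (insert e E) ends \<subseteq> isolated_vertices V E ends - {v}" unfolding isoeq by blast
        then have "card (isolated_vertices V (insert e E) ends) \<le> card (isolated_vertices V E ends - {v})"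
          using finI by (intro card_mono) auto
        moreover have "card (isolated_vertices V E ends - {v}) + 1 = card (isolated_vertices V E ends)"
          using card.remove[OF finI vI[OF True]] by simp
        ultimately show ?thesis by simp
      qed
      ultimately show ?thesis using c2 by simp
    next
      case False
      then have "?b \<noteq> x" by (metis flip_flip flip_x)
      then have nb: "?b \<notin> orbit ?\<phi> x" unfolding ox_ins(1)[OF rot] using by2 by simp
      have "cyc ?\<psi> D' + 1 = cyc ?\<phi> D'" using merge_cyc[OF ph finD' xD' bD'2 nb] .
      moreover have "card (isolated_vertices V (insert e E) ends) \<le> card (isolated_vertices V E ends)"
        using card_iso_le[OF finV] .
      ultimately show ?thesis using c2 by simp
    qed
    then have "num_faces V (insert e E) ends \<sigma>' \<le> num_faces V E ends \<sigma> + 1" using F F' by simp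
    then show ?thesis using comp by simp
  next
    case False
    have comp: "num_components V E ends \<le> num_components V (insert e E) ends + 1"
      using comp_insert_le[of V ends e E, OF finV uV vV] .
    have uv: "u \<noteq> v" using False by auto
    define N where "N = {d \<in> D. \<not> conn E ends u (vt d)}"
    have side: "\<And>d. d \<in> D \<Longrightarrow> conn E ends u (vt (dart_flip d)) \<longleftrightarrow> conn E ends u (vt d)"
    proof -
      fix d assume d: "d \<in> D"
      have adj: "(vt d, vt (dart_flip d)) \<in> mg_adj E ends"
      proof -
        obtain e1 b1 where "d = (e1, b1)" by (cases d)
        then show ?thesis using d unfolding mg_adj_def
          by (cases b1) (auto simp: dart_vertex_def dart_flip_def in_darts)
      qed
      have "conn E ends (vt d) (vt (dart_flip d))" using adj unfolding conn_def by (simp add: r_into_rtrancl)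
      moreover have "conn E ends (vt (dart_flip d)) (vt d)" using calculation by (rule conn_sym)
      ultimately show "conn E ends u (vt (dart_flip d)) \<longleftrightarrow> conn E ends u (vt d)"
        using conn_trans by metis
    qed
    have closed: "\<And>d. d \<in> N \<Longrightarrow> ?\<phi> d \<in> N"
    proof -
      fix d assume d: "d \<in> N"
      then have dD: "d \<in> D" and nc: "\<not> conn E ends u (vt d)" unfolding N_def by auto
      have fD: "dart_flip d \<in> D" using dD by simp
      have "d \<in> D'" using dD DD' by blast
      then have pd: "?\<phi> d = \<sigma> (dart_flip d)" by (simp add: fperm_def)
      have "\<sigma> (dart_flip d) \<in> D" using fD permutes_in_image[OF rot_perm[OF rot]] by simp
      moreover have "vt (\<sigma> (dart_flip d)) = vt (dart_flip d)" using rot_vert[OF rot] fD DD' by blast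
      ultimately show "?\<phi> d \<in> N" using pd side[OF dD] nc unfolding N_def by simp
    qed
    have orbN: "\<And>z. z \<in> N \<Longrightarrow> orbit ?\<phi> z \<subseteq> N"
    proof
      fix z w assume z: "z \<in> N"
      assume "w \<in> orbit ?\<phi> z"
      then show "w \<in> N"
      proof induct
        case base then show ?case using closed z by blast
      next
        case (step w) then show ?case using closed by blast
      qed
    qed
    have H1: "cyc ?\<psi> D' + (if \<beta> = y then 0 else 1) = cyc ?\<phi> D' \<and> orbit ?\<psi> y \<subseteq> {x, y} \<union> N"
    proof (cases "\<beta> = y")
      case True
      then have "?b = x" by (simp add: flip_y)
      then show ?thesis using True ox_ins(2)[OF rot] by simp
    next
      case bny: False
      then have "?b \<noteq> x" by (metis flip_flip flip_x)
      then have nb: "?b \<notin> orbit ?\<phi> x" unfolding ox_ins(1)[OF rot] using by2 by simp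
      have bD: "\<beta> \<in> D" using bD' bx bny D_diff by blast
      have bN: "?b \<in> N" using side[OF bD] vtb False bD unfolding N_def by simp
      note M = merge_orbit[OF ph finD' xD' bD'2 nb]
      have "y \<in> orbit ?\<psi> x" using M(2) ox_ins(1)[OF rot] by blast
      then have "orbit ?\<psi> y = orbit ?\<psi> x" using perm_orbit_same[OF M(1) finD'] by blast
      then have "orbit ?\<psi> y \<subseteq> {x, y} \<union> N" using M(2) ox_ins(1)[OF rot] orbN[OF bN] by blast
      then show ?thesis using merge_cyc[OF ph finD' xD' bD'2 nb] bny by simp
    qed
    have H2: "cyc ?\<phi>' D' + (if \<alpha> = x then 0 else 1) = cyc ?\<psi> D'"
    proof (cases "\<alpha> = x")
      case True
      then show ?thesis unfolding fe by (simp add: flip_x)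
    next
      case anx: False
      have any: "\<alpha> \<noteq> y" using vta vt_y uv by metis
      have aD: "\<alpha> \<in> D" using aD' anx any D_diff by blast
      have "conn E ends u (vt ?a)" using side[OF aD] vta by simp
      then have "?a \<notin> N" unfolding N_def by simp
      moreover have "?a \<noteq> x" "?a \<noteq> y" using aD xD yD by (metis flip_in)+
      ultimately have na: "?a \<notin> orbit ?\<psi> y" using H1 by blast
      show ?thesis unfolding fe using merge_cyc[OF pp finD' yD' aD'2 na] anx by simp
    qed
    have H3: "card (isolated_vertices V (insert e E) ends) + (if \<alpha> = x then 1 else 0) + (if \<beta> = y then 1 else 0)
       \<le> card (isolated_vertices V E ends)"
    proof -
      let ?I = "isolated_vertices V E ends"
      have "card (?I - {u, v}) + (if u \<in> ?I then 1 else 0) + (if v \<in> ?I then 1 else 0) = card ?I"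
        using card_diff2[OF finI uv] .
      then show ?thesis unfolding isoeq using uI vI by (auto split: if_splits)
    qed
    have "num_faces V (insert e E) ends \<sigma>' + 1 \<le> num_faces V E ends \<sigma>"
      using F F' H1 H2 H3 by (auto split: if_splits)
    then show ?thesis using comp by simp
  qed
  have "gterm V E ends \<sigma> \<le> gterm V (insert e E) ends \<sigma>'"
    unfolding gterm_def card_ins using key by simp
  then show ?thesis using rot by blast
qed

end




lemma rot_exists: "finite E \<Longrightarrow> \<exists>\<sigma>. rotation_system E ends \<sigma>"
proof (induct E rule: finite_induct)
  case empty
  have "rotation_system {} ends id" unfolding rotation_system_def by (simp add: mg_darts_def permutes_id)
  then show ?case by blast
next
  case (insert e E)
  interpret INS E ends e using insert by unfold_locales auto
  obtain \<sigma> where rot: "rotation_system E ends \<sigma>" using insert by blast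
  define \<alpha> where "\<alpha> = (if \<exists>d\<in>D. vt d = u then (SOME d. d \<in> D \<and> vt d = u) else x)"
  define \<beta> where "\<beta> = (if \<exists>d\<in>D. vt d = v then (SOME d. d \<in> D \<and> vt d = v) else if u = v then x else y)"
  have A: "(\<alpha> \<in> D \<and> vt \<alpha> = u) \<or> (\<alpha> = x \<and> (\<forall>d\<in>D. vt d \<noteq> u))"
  proof (cases "\<exists>d\<in>D. vt d = u")
    case True
    then have "\<exists>d. d \<in> D \<and> vt d = u" by blast
    from someI_ex[OF this] show ?thesis unfolding \<alpha>_def using True by simp
  next
    case False then show ?thesis unfolding \<alpha>_def by simp
  qed
  have B: "(\<beta> \<in> D \<union> {x} \<and> vt \<beta> = v) \<or> (\<beta> = y \<and> (\<forall>d\<in>D \<union> {x}. vt d \<noteq> v))"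
  proof (cases "\<exists>d\<in>D. vt d = v")
    case True
    then have "\<exists>d. d \<in> D \<and> vt d = v" by blast
    from someI_ex[OF this] show ?thesis unfolding \<beta>_def using True by simp
  next
    case False then show ?thesis unfolding \<beta>_def using vt_x by auto
  qed
  show ?case using rot_add[OF rot A B] by blast
qed

lemma mg_genus_attained:
  assumes "finite E" shows "\<exists>\<sigma>. rotation_system E ends \<sigma> \<and> rotation_genus V E ends \<sigma> = mg_genus V E ends"
proof -
  obtain \<sigma> where "rotation_system E ends \<sigma>" using rot_exists[OF assms] by blast
  then have ex: "\<exists>n \<sigma>. rotation_system E ends \<sigma> \<and> rotation_genus V E ends \<sigma> = n" by blast
  show ?thesis unfolding mg_genus_def using LeastI_ex[OF ex] by blast
qed

lemma mg_genus_le: "rotation_system E ends \<sigma> \<Longrightarrow> mg_genus V E ends \<le> rotation_genus V E ends \<sigma>"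
  unfolding mg_genus_def by (rule Least_le) blast

lemma rg_mono: "gterm V E ends \<sigma> \<le> gterm V' E' ends' \<sigma>' \<Longrightarrow>
  rotation_genus V E ends \<sigma> \<le> rotation_genus V' E' ends' \<sigma>'"
  unfolding rotation_genus_gterm by (intro nat_mono zdiv_mono1) simp_all


lemma mg_genus_rename:
  fixes h :: "'a \<Rightarrow> 'b" and E :: "'a set" and ends :: "'a \<Rightarrow> 'v \<times> 'v" and ends2 :: "'b \<Rightarrow> 'v \<times> 'v"
  assumes finE: "finite E" and inj: "inj_on h E" and e2: "\<And>e. e \<in> E \<Longrightarrow> ends2 (h e) = ends e"
  shows "mg_genus V (h ` E) ends2 \<le> mg_genus V E ends"
proof -
  obtain \<sigma> where rot: "rotation_system E ends \<sigma>" and g: "rotation_genus V E ends \<sigma> = mg_genus V E ends"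
    using mg_genus_attained[OF finE] by blast
  let ?D = "mg_darts E" and ?D2 = "mg_darts (h ` E)"
  define H where "H = (\<lambda>z::'a \<times> bool. (h (fst z), snd z))"
  define Hi where "Hi = (\<lambda>z::'b \<times> bool. (inv_into E h (fst z), snd z))"
  have HD: "\<And>d. d \<in> ?D \<Longrightarrow> H d \<in> ?D2" by (auto simp: H_def mg_darts_def)
  have HiD: "\<And>z. z \<in> ?D2 \<Longrightarrow> Hi z \<in> ?D" by (auto simp: Hi_def mg_darts_def inv_into_into)
  have HHi: "\<And>z. z \<in> ?D2 \<Longrightarrow> H (Hi z) = z" by (auto simp: H_def Hi_def mg_darts_def f_inv_into_f)
  have HiH: "\<And>d. d \<in> ?D \<Longrightarrow> Hi (H d) = d" using inj by (auto simp: H_def Hi_def mg_darts_def)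
  have vtH: "\<And>d. d \<in> ?D \<Longrightarrow> dart_vertex ends2 (H d) = dart_vertex ends d"
    using e2 by (auto simp: H_def mg_darts_def dart_vertex_def)
  have flH: "\<And>d. dart_flip (H d) = H (dart_flip d)" by (simp add: H_def dart_flip_def)
  have pD: "\<sigma> permutes ?D" using rot_perm[OF rot] .
  define \<sigma>2 where "\<sigma>2 = (\<lambda>z. if z \<in> ?D2 then H (\<sigma> (Hi z)) else z)"
  define \<sigma>2i where "\<sigma>2i = (\<lambda>z. if z \<in> ?D2 then H (inv \<sigma> (Hi z)) else z)"
  have sD: "\<And>d. d \<in> ?D \<Longrightarrow> \<sigma> d \<in> ?D" using permutes_in_image[OF pD] by simp
  have siD: "\<And>d. d \<in> ?D \<Longrightarrow> inv \<sigma> d \<in> ?D" using permutes_in_image[OF permutes_inv[OF pD]] by simp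
  have comm: "\<And>d. d \<in> ?D \<Longrightarrow> \<sigma>2 (H d) = H (\<sigma> d)" unfolding \<sigma>2_def using HD HiH by simp
  have p2: "\<sigma>2 permutes ?D2"
  proof (rule bij_imp_permutes)
    show "bij_betw \<sigma>2 ?D2 ?D2"
    proof (rule bij_betw_byWitness[where f'=\<sigma>2i])
      show "\<forall>a\<in>?D2. \<sigma>2i (\<sigma>2 a) = a"
        unfolding \<sigma>2_def \<sigma>2i_def using HD HiD HiH HHi sD permutes_inverses(2)[OF pD] by simp
      show "\<forall>a\<in>?D2. \<sigma>2 (\<sigma>2i a) = a"
        unfolding \<sigma>2_def \<sigma>2i_def using HD HiD HiH HHi siD permutes_inverses(1)[OF pD] by simp
      show "\<sigma>2 ` ?D2 \<subseteq> ?D2"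
      proof (rule image_subsetI)
        fix w assume w: "w \<in> ?D2"
        have "H (\<sigma> (Hi w)) \<in> ?D2" using HD[OF sD[OF HiD[OF w]]] .
        then show "\<sigma>2 w \<in> ?D2" using w unfolding \<sigma>2_def by simp
      qed
      show "\<sigma>2i ` ?D2 \<subseteq> ?D2"
      proof (rule image_subsetI)
        fix w assume w: "w \<in> ?D2"
        have "H (inv \<sigma> (Hi w)) \<in> ?D2" using HD[OF siD[OF HiD[OF w]]] .
        then show "\<sigma>2i w \<in> ?D2" using w unfolding \<sigma>2i_def by simp
      qed
    qed
    show "\<And>z. z \<notin> ?D2 \<Longrightarrow> \<sigma>2 z = z" unfolding \<sigma>2_def by simp
  qed
  have orbH: "\<And>d. d \<in> ?D \<Longrightarrow> orbit \<sigma>2 (H d) = H ` orbit \<sigma> d"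
  proof -
    fix d assume d: "d \<in> ?D"
    have "H ` orbit \<sigma> d = orbit \<sigma>2 (H d)"
    proof (rule orbit_inverse)
      show "d \<in> orbit \<sigma> d" using perm_self_in_orbit[OF pD finite_darts[OF finE]] .
      show "\<And>z. z \<in> orbit \<sigma> d \<Longrightarrow> \<sigma>2 (H z) = H (\<sigma> z)"
        using comm permutes_orbit_subset[OF pD d] by blast
    qed
    then show "orbit \<sigma>2 (H d) = H ` orbit \<sigma> d" by simp
  qed
  have rot2: "rotation_system (h ` E) ends2 \<sigma>2"
    unfolding rotation_system_def
  proof (intro conjI p2 ballI)
    fix z assume z: "z \<in> ?D2"
    define d where "d = Hi z"
    have d: "d \<in> ?D" "z = H d" using HiD HHi z d_def by auto
    have "orbit \<sigma>2 z = H ` {d' \<in> ?D. dart_vertex ends d' = dart_vertex ends d}"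
      using orbH[OF d(1)] rot_orbit[OF rot d(1)] d(2) by simp
    also have "\<dots> = {z' \<in> ?D2. dart_vertex ends2 z' = dart_vertex ends2 z}"
    proof
      show "H ` {d' \<in> ?D. dart_vertex ends d' = dart_vertex ends d} \<subseteq> {z' \<in> ?D2. dart_vertex ends2 z' = dart_vertex ends2 z}"
        using HD vtH d by auto
      show "{z' \<in> ?D2. dart_vertex ends2 z' = dart_vertex ends2 z} \<subseteq> H ` {d' \<in> ?D. dart_vertex ends d' = dart_vertex ends d}"
      proof
        fix z' assume z': "z' \<in> {z' \<in> ?D2. dart_vertex ends2 z' = dart_vertex ends2 z}"
        then have "Hi z' \<in> ?D" "z' = H (Hi z')" using HiD HHi by auto
        moreover have "dart_vertex ends (Hi z') = dart_vertex ends d"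
          using z' vtH[OF \<open>Hi z' \<in> ?D\<close>] vtH[OF d(1)] d(2) \<open>z' = H (Hi z')\<close> by simp
        ultimately show "z' \<in> H ` {d' \<in> ?D. dart_vertex ends d' = dart_vertex ends d}" by blast
      qed
    qed
    finally show "orbit \<sigma>2 z = {z' \<in> ?D2. dart_vertex ends2 z' = dart_vertex ends2 z}" .
  qed
  let ?\<phi> = "fperm \<sigma> E" and ?\<phi>2 = "fperm \<sigma>2 (h ` E)"
  have fcomm: "\<And>d. d \<in> ?D \<Longrightarrow> ?\<phi>2 (H d) = H (?\<phi> d)"
    using HD comm flH by (simp add: fperm_def)
  have fp: "?\<phi> permutes ?D" using fperm_perm[OF pD] .
  have forb: "\<And>d. d \<in> ?D \<Longrightarrow> orbit ?\<phi>2 (H d) = H ` orbit ?\<phi> d"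
  proof -
    fix d assume d: "d \<in> ?D"
    have "H ` orbit ?\<phi> d = orbit ?\<phi>2 (H d)"
    proof (rule orbit_inverse)
      show "d \<in> orbit ?\<phi> d" using perm_self_in_orbit[OF fp finite_darts[OF finE]] .
      show "\<And>z. z \<in> orbit ?\<phi> d \<Longrightarrow> ?\<phi>2 (H z) = H (?\<phi> z)"
        using fcomm permutes_orbit_subset[OF fp d] by blast
    qed
    then show "orbit ?\<phi>2 (H d) = H ` orbit ?\<phi> d" by simp
  qed
  have D2eq: "?D2 = H ` ?D" using HD HHi HiD by (metis (no_types, lifting) image_eqI subsetI subset_antisym image_subsetI)
  have injH: "inj_on H ?D" using HiH by (metis inj_on_inverseI)
  have "(\<lambda>z. orbit ?\<phi>2 z) ` ?D2 = (image H) ` ((\<lambda>d. orbit ?\<phi> d) ` ?D)"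
    unfolding D2eq image_image using forb by simp
  moreover have "inj_on (image H) ((\<lambda>d. orbit ?\<phi> d) ` ?D)"
  proof (rule inj_onI)
    fix A B assume "A \<in> (\<lambda>d. orbit ?\<phi> d) ` ?D" "B \<in> (\<lambda>d. orbit ?\<phi> d) ` ?D" "H ` A = H ` B"
    moreover then have "A \<subseteq> ?D" "B \<subseteq> ?D" using permutes_orbit_subset[OF fp] by auto
    ultimately show "A = B" using inj_on_image_eq_iff[OF injH] by metis
  qed
  ultimately have cyceq: "cyc ?\<phi>2 ?D2 = cyc ?\<phi> ?D" unfolding cyc_def by (simp add: card_image)
  have isoeq: "isolated_vertices V (h ` E) ends2 = isolated_vertices V E ends"
    unfolding isolated_vertices_def D2eq using vtH by auto
  have adjeq: "mg_adj (h ` E) ends2 = mg_adj E ends"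
    unfolding mg_adj_def using e2 by force
  have compeq: "num_components V (h ` E) ends2 = num_components V E ends"
    unfolding num_components_def adjeq ..
  have faceq: "num_faces V (h ` E) ends2 \<sigma>2 = num_faces V E ends \<sigma>"
    using num_faces_cyc[OF p2, of V ends2] num_faces_cyc[OF pD, of V ends] cyceq isoeq by simp
  have cardeq: "card (h ` E) = card E" using card_image[OF inj] .
  have "rotation_genus V (h ` E) ends2 \<sigma>2 = rotation_genus V E ends \<sigma>"
    unfolding rotation_genus_def compeq faceq cardeq ..
  then show ?thesis using mg_genus_le[OF rot2, of V] g by simp
qed

context INS
begin

lemma mg_genus_add:
  assumes finV: "finite V" and par: "(\<exists>e0\<in>E. ends e0 = ends e) \<or> (u = v \<and> u \<in> V)"
  shows "mg_genus V (insert e E) ends \<le> mg_genus V E ends"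
proof -
  obtain \<sigma> where rot: "rotation_system E ends \<sigma>" and g: "rotation_genus V E ends \<sigma> = mg_genus V E ends"
    using mg_genus_attained[OF finE] by blast
  obtain \<sigma>' where rot': "rotation_system (insert e E) ends \<sigma>'"
    and le: "gterm V (insert e E) ends \<sigma>' \<le> gterm V E ends \<sigma>"
    using gterm_add[OF finV rot par] by blast
  have "mg_genus V (insert e E) ends \<le> rotation_genus V (insert e E) ends \<sigma>'" by (rule mg_genus_le[OF rot'])
  also have "\<dots> \<le> rotation_genus V E ends \<sigma>" by (rule rg_mono[OF le])
  finally show ?thesis using g by simp
qed

lemma mg_genus_del:
  assumes finV: "finite V" and uV: "u \<in> V" and vV: "v \<in> V"
  shows "mg_genus V E ends \<le> mg_genus V (insert e E) ends"
proof -
  have finE': "finite (insert e E)" using finE by simp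
  obtain \<sigma>' where rot': "rotation_system (insert e E) ends \<sigma>'"
    and g: "rotation_genus V (insert e E) ends \<sigma>' = mg_genus V (insert e E) ends"
    using mg_genus_attained[OF finE'] by blast
  obtain \<sigma> where rot: "rotation_system E ends \<sigma>"
    and le: "gterm V E ends \<sigma> \<le> gterm V (insert e E) ends \<sigma>'"
    using gterm_del[OF finV uV vV rot'] by blast
  have "mg_genus V E ends \<le> rotation_genus V E ends \<sigma>" by (rule mg_genus_le[OF rot])
  also have "\<dots> \<le> rotation_genus V (insert e E) ends \<sigma>'" by (rule rg_mono[OF le])
  finally show ?thesis using g by simp
qed

end


lemma genus_transfer:
  fixes E E' :: "'e set" and endsA endsB :: "'e \<Rightarrow> 'v \<times> 'v"
  assumes finV: "finite V" and finE: "finite E" and finE': "finite E'"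
    and EA: "\<And>e. e \<in> E \<Longrightarrow> fst (endsA e) \<in> V \<and> snd (endsA e) \<in> V"
    and EB: "\<And>e. e \<in> E' \<Longrightarrow> (fst (endsB e) = snd (endsB e) \<and> fst (endsB e) \<in> V) \<or> (\<exists>e0\<in>E. endsB e = endsA e0)"
  shows "mg_genus V E' endsB \<le> mg_genus V E endsA"
proof -
  define ec where "ec = case_sum endsA endsB"
  have s1: "mg_genus V (Inl ` E) ec \<le> mg_genus V E endsA"
    by (rule mg_genus_rename[OF finE]) (simp_all add: ec_def)
  have s2: "finite S \<Longrightarrow> S \<subseteq> E' \<Longrightarrow> mg_genus V (Inl ` E \<union> Inr ` S) ec \<le> mg_genus V (Inl ` E) ec" for S
  proof (induct S rule: finite_induct)
    case empty then show ?case by simp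
  next
    case (insert e' S)
    define X where "X = Inl ` E \<union> Inr ` S"
    have eq: "Inl ` E \<union> Inr ` (insert e' S) = insert (Inr e') X" unfolding X_def by auto
    interpret INS X ec "Inr e'" using insert finE unfolding X_def by unfold_locales auto
    have par: "(\<exists>e0\<in>X. ec e0 = ec (Inr e')) \<or> (u = v \<and> u \<in> V)"
    proof -
      from EB[of e'] insert(4) consider "fst (endsB e') = snd (endsB e') \<and> fst (endsB e') \<in> V" | "\<exists>e0\<in>E. endsB e' = endsA e0" by auto
      then show ?thesis
      proof cases
        case 1 then have "u = v \<and> u \<in> V" by (simp add: ec_def) (metis)
        then show ?thesis by blast
      next
        case 2
        then obtain e0 where "e0 \<in> E" "endsB e' = endsA e0" by auto
        then have "Inl e0 \<in> X" "ec (Inl e0) = ec (Inr e')" unfolding X_def ec_def by auto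
        then show ?thesis by blast
      qed
    qed
    have "mg_genus V (insert (Inr e') X) ec \<le> mg_genus V X ec" by (rule mg_genus_add[OF finV par])
    then show ?case using eq insert X_def by simp
  qed
  have s3: "finite T \<Longrightarrow> T \<subseteq> E \<Longrightarrow> mg_genus V (Inl ` (E - T) \<union> Inr ` E') ec \<le> mg_genus V (Inl ` E \<union> Inr ` E') ec" for T
  proof (induct T rule: finite_induct)
    case empty then show ?case by simp
  next
    case (insert t T)
    define Y where "Y = Inl ` (E - insert t T) \<union> Inr ` E'"
    have tE: "t \<in> E" using insert by simp
    have eq: "Inl ` (E - T) \<union> Inr ` E' = insert (Inl t) Y" unfolding Y_def using tE insert(2) by auto
    interpret INS Y ec "Inl t" using finE finE' unfolding Y_def by unfold_locales auto
    have uv: "u \<in> V" "v \<in> V" using EA[OF tE] by (simp_all add: ec_def)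
    have "mg_genus V Y ec \<le> mg_genus V (insert (Inl t) Y) ec" by (rule mg_genus_del[OF finV uv])
    then show ?case using eq insert Y_def by simp
  qed
  have s3': "mg_genus V (Inr ` E') ec \<le> mg_genus V (Inl ` E \<union> Inr ` E') ec"
    using s3[OF finE order_refl] by simp
  have s4: "mg_genus V (projr ` (Inr ` E' :: ('e + 'e) set)) endsB \<le> mg_genus V (Inr ` E') ec"
  proof (rule mg_genus_rename)
    show "finite (Inr ` E')" using finE' by simp
    show "inj_on projr (Inr ` E')" by (auto simp: inj_on_def)
    show "\<And>z. z \<in> Inr ` E' \<Longrightarrow> endsB (projr z) = ec z" by (auto simp: ec_def)
  qed
  have "projr ` (Inr ` E' :: ('e + 'e) set) = E'" by (simp add: image_image)
  then show ?thesis using s1 s2[OF finE' order_refl] s3' s4 by simp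
qed




lemma foldl_in: "is_dfa \<Sigma> A \<Longrightarrow> q \<in> states A \<Longrightarrow> w \<in> lists \<Sigma> \<Longrightarrow> foldl (delta A) q w \<in> states A"
proof (induct w arbitrary: q)
  case Nil then show ?case by simp
next
  case (Cons a w)
  have "delta A q a \<in> states A" using Cons(2,3,4) unfolding is_dfa_def by simp
  then show ?case using Cons by simp
qed

lemma minimal_reach:
  assumes min: "minimal_dfa \<Sigma> L M" and q: "q \<in> states M"
  shows "\<exists>w\<in>lists \<Sigma>. foldl (delta M) (init M) w = q"
proof -
  have dfa: "is_dfa \<Sigma> M" and lang: "dfa_lang \<Sigma> M = L" using min unfolding minimal_dfa_def by auto
  define R where "R = {foldl (delta M) (init M) w | w. w \<in> lists \<Sigma>}"
  have RS: "R \<subseteq> states M" unfolding R_def using foldl_in[OF dfa] dfa unfolding is_dfa_def by blast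
  have finS: "finite (states M)" using dfa unfolding is_dfa_def by simp
  define A where "A = M\<lparr>states := R, final := final M \<inter> R\<rparr>"
  have initR: "init M \<in> R" unfolding R_def by (rule CollectI, rule exI[of _ "[]"]) simp
  have closed: "\<And>q a. q \<in> R \<Longrightarrow> a \<in> \<Sigma> \<Longrightarrow> delta M q a \<in> R"
  proof -
    fix q a assume "q \<in> R" "a \<in> \<Sigma>"
    then obtain w where "w \<in> lists \<Sigma>" "q = foldl (delta M) (init M) w" unfolding R_def by blast
    then have "w @ [a] \<in> lists \<Sigma>" "delta M q a = foldl (delta M) (init M) (w @ [a])" using \<open>a \<in> \<Sigma>\<close> by auto
    then show "delta M q a \<in> R" unfolding R_def by blast
  qed
  have dA: "is_dfa \<Sigma> A" unfolding is_dfa_def A_def using RS finS initR closed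
    by (auto intro: finite_subset)
  have "dfa_lang \<Sigma> A = dfa_lang \<Sigma> M"
    unfolding dfa_lang_def A_def R_def by auto
  then have "card (states M) \<le> card (states A)" using min dA lang unfolding minimal_dfa_def by auto
  then have "card (states M) \<le> card R" unfolding A_def by simp
  then have "R = states M" using RS finS by (meson card_seteq)
  then have "q \<in> R" using q by simp
  then obtain w where "w \<in> lists \<Sigma>" "q = foldl (delta M) (init M) w" unfolding R_def by blast
  then show ?thesis by blast
qed

definition eqv :: "'a set \<Rightarrow> 'a dfa \<Rightarrow> nat \<Rightarrow> nat \<Rightarrow> bool" where
  "eqv \<Sigma> M q q' \<longleftrightarrow> (\<forall>v\<in>lists \<Sigma>. (foldl (delta M) q v \<in> final M) = (foldl (delta M) q' v \<in> final M))"

lemma eqv_refl: "eqv \<Sigma> M q q" by (simp add: eqv_def)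
lemma eqv_sym: "eqv \<Sigma> M q q' \<Longrightarrow> eqv \<Sigma> M q' q" by (simp add: eqv_def)
lemma eqv_trans: "eqv \<Sigma> M q q' \<Longrightarrow> eqv \<Sigma> M q' q'' \<Longrightarrow> eqv \<Sigma> M q q''" by (simp add: eqv_def)
lemma eqv_foldl: "eqv \<Sigma> M q q' \<Longrightarrow> w \<in> lists \<Sigma> \<Longrightarrow> eqv \<Sigma> M (foldl (delta M) q w) (foldl (delta M) q' w)"
  unfolding eqv_def by (metis append_in_lists_conv foldl_append)
lemma eqv_delta: "eqv \<Sigma> M q q' \<Longrightarrow> a \<in> \<Sigma> \<Longrightarrow> eqv \<Sigma> M (delta M q a) (delta M q' a)"
  using eqv_foldl[of \<Sigma> M q q' "[a]"] by simp

lemma minimal_distinct: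
  assumes min: "minimal_dfa \<Sigma> L M" and q1: "q1 \<in> states M" and q2: "q2 \<in> states M"
    and eq: "eqv \<Sigma> M q1 q2"
  shows "q1 = q2"
proof -
  have dfa: "is_dfa \<Sigma> M" and lang: "dfa_lang \<Sigma> M = L" using min unfolding minimal_dfa_def by auto
  have finS: "finite (states M)" using dfa unfolding is_dfa_def by simp
  define rep where "rep = (\<lambda>q. LEAST q'. q' \<in> states M \<and> eqv \<Sigma> M q' q)"
  have rep: "\<And>q. q \<in> states M \<Longrightarrow> rep q \<in> states M \<and> eqv \<Sigma> M (rep q) q"
  proof -
    fix q assume "q \<in> states M"
    then have "\<exists>q'. q' \<in> states M \<and> eqv \<Sigma> M q' q" using eqv_refl by blast
    then show "rep q \<in> states M \<and> eqv \<Sigma> M (rep q) q" unfolding rep_def by (rule LeastI_ex)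
  qed
  have rep_cong: "\<And>q q'. eqv \<Sigma> M q q' \<Longrightarrow> rep q = rep q'"
  proof -
    fix q q' assume e: "eqv \<Sigma> M q q'"
    have "\<And>z. (z \<in> states M \<and> eqv \<Sigma> M z q) = (z \<in> states M \<and> eqv \<Sigma> M z q')"
      using e eqv_trans eqv_sym by metis
    then show "rep q = rep q'" unfolding rep_def by simp
  qed
  define Q where "Q = \<lparr>states = rep ` states M, init = rep (init M), final = final M \<inter> rep ` states M,
      delta = (\<lambda>p a. rep (delta M p a))\<rparr>"
  have initM: "init M \<in> states M" using dfa unfolding is_dfa_def by simp
  have clM: "\<And>q a. q \<in> states M \<Longrightarrow> a \<in> \<Sigma> \<Longrightarrow> delta M q a \<in> states M" using dfa unfolding is_dfa_def by simp
  have dQ: "is_dfa \<Sigma> Q" unfolding is_dfa_def Q_def using finS initM rep clM by auto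
  have run: "\<And>w q. w \<in> lists \<Sigma> \<Longrightarrow> q \<in> states M \<Longrightarrow>
     foldl (delta Q) (rep q) w \<in> states M \<and> eqv \<Sigma> M (foldl (delta Q) (rep q) w) (foldl (delta M) q w)"
  proof -
    fix w q show "w \<in> lists \<Sigma> \<Longrightarrow> q \<in> states M \<Longrightarrow>
     foldl (delta Q) (rep q) w \<in> states M \<and> eqv \<Sigma> M (foldl (delta Q) (rep q) w) (foldl (delta M) q w)"
    proof (induct w arbitrary: q)
      case Nil then show ?case using rep by simp
    next
      case (Cons a w)
      have a: "a \<in> \<Sigma>" and w: "w \<in> lists \<Sigma>" using Cons by auto
      have rq: "rep q \<in> states M" "eqv \<Sigma> M (rep q) q" using rep Cons by auto
      define q1 where "q1 = delta M (rep q) a"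
      have q1: "q1 \<in> states M" unfolding q1_def using clM rq a by simp
      have "delta Q (rep q) a = rep q1" unfolding Q_def q1_def by simp
      then have "foldl (delta Q) (rep q) (a # w) = foldl (delta Q) (rep q1) w" by simp
      moreover note IH = Cons(1)[OF w q1]
      moreover have "eqv \<Sigma> M (foldl (delta M) q1 w) (foldl (delta M) q (a # w))"
        using eqv_foldl[OF eqv_delta[OF rq(2) a] w] unfolding q1_def by simp
      ultimately show ?case using eqv_trans by metis
    qed
  qed
  have "dfa_lang \<Sigma> Q = dfa_lang \<Sigma> M"
  proof (intro set_eqI)
    fix w
    show "w \<in> dfa_lang \<Sigma> Q \<longleftrightarrow> w \<in> dfa_lang \<Sigma> M"
    proof (cases "w \<in> lists \<Sigma>")
      case True
      note r = run[OF True initM]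
      have "init Q = rep (init M)" unfolding Q_def by simp
      moreover have "(foldl (delta Q) (rep (init M)) w \<in> final M) = (foldl (delta M) (init M) w \<in> final M)"
        using r unfolding eqv_def by (metis foldl_Nil lists.Nil)
      moreover have "foldl (delta Q) (rep (init M)) w \<in> rep ` states M"
      proof -
        have "foldl (delta Q) (rep (init M)) w \<in> states Q"
          using foldl_in[OF dQ _ True] dQ unfolding is_dfa_def Q_def by simp
        then show ?thesis unfolding Q_def by simp
      qed
      ultimately show ?thesis unfolding dfa_lang_def using True by (simp add: Q_def)
    next
      case False then show ?thesis unfolding dfa_lang_def by simp
    qed
  qed
  then have "card (states M) \<le> card (states Q)" using min dQ lang unfolding minimal_dfa_def by auto
  then have "card (states M) \<le> card (rep ` states M)" unfolding Q_def by simp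
  then have "card (rep ` states M) = card (states M)" using card_image_le[OF finS, of rep] by simp
  then have "inj_on rep (states M)" using finS eq_card_imp_inj_on by blast
  moreover have "rep q1 = rep q2" using rep_cong[OF eq] .
  ultimately show ?thesis using q1 q2 by (meson inj_onD)
qed


lemma lang_foldl:
  assumes "w \<in> lists \<Sigma>" "v \<in> lists \<Sigma>"
  shows "(foldl (delta M) (foldl (delta M) (init M) w) v \<in> final M) = (w @ v \<in> dfa_lang \<Sigma> M)"
  using assms unfolding dfa_lang_def by simp

lemma transfer_le:
  assumes finS: "finite \<Sigma>" and min: "minimal_dfa \<Sigma> L M" and min': "minimal_dfa \<Sigma> L' M'"
    and iso: "simple_digraph_iso \<Sigma> M M'" and dA: "is_dfa \<Sigma> A" and lA: "dfa_lang \<Sigma> A = L"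
  shows "\<exists>A'. is_dfa \<Sigma> A' \<and> dfa_lang \<Sigma> A' = L' \<and> dfa_genus \<Sigma> A' \<le> dfa_genus \<Sigma> A"
proof -
  obtain f where bij: "bij_betw f (states M) (states M')"
    and edge: "\<And>q q'. q \<in> states M \<Longrightarrow> q' \<in> states M \<Longrightarrow>
        dfa_simple_edge \<Sigma> M q q' \<longleftrightarrow> dfa_simple_edge \<Sigma> M' (f q) (f q')"
    using iso unfolding simple_digraph_iso_def by blast
  have dM: "is_dfa \<Sigma> M" and lM: "dfa_lang \<Sigma> M = L" using min unfolding minimal_dfa_def by auto
  have dM': "is_dfa \<Sigma> M'" and lM': "dfa_lang \<Sigma> M' = L'" using min' unfolding minimal_dfa_def by auto
  have initA: "init A \<in> states A" and initM: "init M \<in> states M" and initM': "init M' \<in> states M'"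
    using dA dM dM' unfolding is_dfa_def by auto
  define R where "R = {foldl (delta A) (init A) w | w. w \<in> lists \<Sigma>}"
  define wit where "wit = (\<lambda>p. SOME w. w \<in> lists \<Sigma> \<and> foldl (delta A) (init A) w = p)"
  define \<pi> where "\<pi> = (\<lambda>p. foldl (delta M) (init M) (wit p))"
  have hom: "\<And>w. w \<in> lists \<Sigma> \<Longrightarrow> \<pi> (foldl (delta A) (init A) w) = foldl (delta M) (init M) w"
  proof -
    fix w assume w: "w \<in> lists \<Sigma>"
    define p where "p = foldl (delta A) (init A) w"
    have "\<exists>w'. w' \<in> lists \<Sigma> \<and> foldl (delta A) (init A) w' = p" using w p_def by blast
    then have "wit p \<in> lists \<Sigma> \<and> foldl (delta A) (init A) (wit p) = p"
      unfolding wit_def by (rule someI_ex)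
    then have wp: "wit p \<in> lists \<Sigma>" "foldl (delta A) (init A) (wit p) = p" by simp_all
    have "eqv \<Sigma> M (foldl (delta M) (init M) (wit p)) (foldl (delta M) (init M) w)"
      unfolding eqv_def
    proof
      fix v assume v: "v \<in> lists \<Sigma>"
      have "(foldl (delta M) (foldl (delta M) (init M) (wit p)) v \<in> final M) = (wit p @ v \<in> L)"
        using lang_foldl[OF wp(1) v] lM by simp
      also have "\<dots> = (foldl (delta A) (foldl (delta A) (init A) (wit p)) v \<in> final A)"
        using lang_foldl[OF wp(1) v] lA by simp
      also have "\<dots> = (foldl (delta A) (foldl (delta A) (init A) w) v \<in> final A)"
        using wp(2) p_def by simp
      also have "\<dots> = (w @ v \<in> L)" using lang_foldl[OF w v] lA by simp
      also have "\<dots> = (foldl (delta M) (foldl (delta M) (init M) w) v \<in> final M)"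
        using lang_foldl[OF w v] lM by simp
      finally show "(foldl (delta M) (foldl (delta M) (init M) (wit p)) v \<in> final M) =
         (foldl (delta M) (foldl (delta M) (init M) w) v \<in> final M)" .
    qed
    then have "foldl (delta M) (init M) (wit p) = foldl (delta M) (init M) w"
      using minimal_distinct[OF min] foldl_in[OF dM initM] wp(1) w by blast
    then show "\<pi> (foldl (delta A) (init A) w) = foldl (delta M) (init M) w"
      unfolding \<pi>_def p_def by simp
  qed
  have RA: "\<And>p. p \<in> R \<Longrightarrow> p \<in> states A" unfolding R_def using foldl_in[OF dA initA] by blast
  have piM: "\<And>p. p \<in> R \<Longrightarrow> \<pi> p \<in> states M"
  proof -
    fix p assume "p \<in> R"
    then obtain w where w: "w \<in> lists \<Sigma>" "p = foldl (delta A) (init A) w" unfolding R_def by blast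
    then show "\<pi> p \<in> states M" using hom[OF w(1)] foldl_in[OF dM initM w(1)] by simp
  qed
  have stepR: "\<And>p a. p \<in> R \<Longrightarrow> a \<in> \<Sigma> \<Longrightarrow> delta A p a \<in> R \<and> \<pi> (delta A p a) = delta M (\<pi> p) a"
  proof -
    fix p a assume p: "p \<in> R" and a: "a \<in> \<Sigma>"
    then obtain w where w: "w \<in> lists \<Sigma>" "p = foldl (delta A) (init A) w" unfolding R_def by blast
    have wa: "w @ [a] \<in> lists \<Sigma>" using w a by simp
    have "delta A p a = foldl (delta A) (init A) (w @ [a])" using w by simp
    moreover then have "delta A p a \<in> R" unfolding R_def using wa by blast
    moreover have "\<pi> (foldl (delta A) (init A) (w @ [a])) = delta M (\<pi> p) a"
      using hom[OF wa] hom[OF w(1)] w(2) by simp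
    ultimately show "delta A p a \<in> R \<and> \<pi> (delta A p a) = delta M (\<pi> p) a" by simp
  qed
  have surj: "\<And>q. q \<in> states M \<Longrightarrow> \<exists>p\<in>R. \<pi> p = q"
  proof -
    fix q assume "q \<in> states M"
    then obtain w where w: "w \<in> lists \<Sigma>" "foldl (delta M) (init M) w = q" using minimal_reach[OF min] by blast
    have "foldl (delta A) (init A) w \<in> R" unfolding R_def using w(1) by blast
    moreover have "\<pi> (foldl (delta A) (init A) w) = q" using hom[OF w(1)] w(2) by simp
    ultimately show "\<exists>p\<in>R. \<pi> p = q" by blast
  qed
  define gi where "gi = inv_into (states M) f"
  have fM: "\<And>q. q \<in> states M \<Longrightarrow> f q \<in> states M'" using bij bij_betwE by blast
  have giM: "\<And>t. t \<in> states M' \<Longrightarrow> gi t \<in> states M \<and> f (gi t) = t"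
    unfolding gi_def using bij by (metis bij_betw_def inv_into_into f_inv_into_f)
  have clM': "\<And>q b. q \<in> states M' \<Longrightarrow> b \<in> \<Sigma> \<Longrightarrow> delta M' q b \<in> states M'" using dM' unfolding is_dfa_def by simp
  have choice: "\<And>p b. p \<in> R \<Longrightarrow> b \<in> \<Sigma> \<Longrightarrow> delta M' (f (\<pi> p)) b \<noteq> f (\<pi> p) \<Longrightarrow>
      \<exists>a. a \<in> \<Sigma> \<and> delta M (\<pi> p) a = gi (delta M' (f (\<pi> p)) b)"
  proof -
    fix p b assume p: "p \<in> R" and b: "b \<in> \<Sigma>" and ne: "delta M' (f (\<pi> p)) b \<noteq> f (\<pi> p)"
    let ?t = "delta M' (f (\<pi> p)) b"
    have t: "?t \<in> states M'" using clM'[OF fM[OF piM[OF p]] b] .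
    have u: "gi ?t \<in> states M" "f (gi ?t) = ?t" using giM[OF t] by auto
    have "dfa_simple_edge \<Sigma> M' (f (\<pi> p)) (f (gi ?t))"
      unfolding dfa_simple_edge_def using u ne b by auto
    then have "dfa_simple_edge \<Sigma> M (\<pi> p) (gi ?t)" using edge[OF piM[OF p] u(1)] by simp
    then show "\<exists>a. a \<in> \<Sigma> \<and> delta M (\<pi> p) a = gi ?t" unfolding dfa_simple_edge_def by blast
  qed
  define ch where "ch = (\<lambda>p b. SOME a. a \<in> \<Sigma> \<and> delta M (\<pi> p) a = gi (delta M' (f (\<pi> p)) b))"
  define cond where "cond = (\<lambda>p b. p \<in> R \<and> b \<in> \<Sigma> \<and> delta M' (f (\<pi> p)) b \<noteq> f (\<pi> p))"
  have chP: "\<And>p b. cond p b \<Longrightarrow> ch p b \<in> \<Sigma> \<and> delta M (\<pi> p) (ch p b) = gi (delta M' (f (\<pi> p)) b)"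
  proof -
    fix p b assume "cond p b"
    then have "\<exists>a. a \<in> \<Sigma> \<and> delta M (\<pi> p) a = gi (delta M' (f (\<pi> p)) b)"
      unfolding cond_def using choice by blast
    then show "ch p b \<in> \<Sigma> \<and> delta M (\<pi> p) (ch p b) = gi (delta M' (f (\<pi> p)) b)"
      unfolding ch_def by (rule someI_ex)
  qed
  define dl where "dl = (\<lambda>p b. if cond p b then delta A p (ch p b) else p)"
  have "\<exists>p. p \<in> R \<and> f (\<pi> p) = init M'"
  proof -
    obtain p where "p \<in> R" "\<pi> p = gi (init M')" using surj giM[OF initM'] by blast
    then show ?thesis using giM[OF initM'] by auto
  qed
  define i0 where "i0 = (SOME p. p \<in> R \<and> f (\<pi> p) = init M')"
  have i0: "i0 \<in> R" "f (\<pi> i0) = init M'" unfolding i0_def using someI_ex[OF \<open>\<exists>p. _\<close>] by auto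
  define A' where "A' = \<lparr>states = states A, init = i0, final = {p \<in> R. f (\<pi> p) \<in> final M'}, delta = dl\<rparr>"
  have inv: "\<And>w. w \<in> lists \<Sigma> \<Longrightarrow> foldl dl i0 w \<in> R \<and> f (\<pi> (foldl dl i0 w)) = foldl (delta M') (init M') w"
  proof -
    fix w show "w \<in> lists \<Sigma> \<Longrightarrow> foldl dl i0 w \<in> R \<and> f (\<pi> (foldl dl i0 w)) = foldl (delta M') (init M') w"
    proof (induct w rule: rev_induct)
      case Nil then show ?case using i0 by simp
    next
      case (snoc b w)
      have w: "w \<in> lists \<Sigma>" and b: "b \<in> \<Sigma>" using snoc by auto
      define p where "p = foldl dl i0 w"
      have p: "p \<in> R" "f (\<pi> p) = foldl (delta M') (init M') w" using snoc(1)[OF w] p_def by auto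
      have goal: "dl p b \<in> R \<and> f (\<pi> (dl p b)) = delta M' (f (\<pi> p)) b"
      proof (cases "cond p b")
        case True
        note c = chP[OF True]
        have "dl p b = delta A p (ch p b)" unfolding dl_def using True by simp
        moreover have "delta A p (ch p b) \<in> R \<and> \<pi> (delta A p (ch p b)) = delta M (\<pi> p) (ch p b)"
          using stepR[OF p(1)] c by blast
        moreover have "f (gi (delta M' (f (\<pi> p)) b)) = delta M' (f (\<pi> p)) b"
          using giM[OF clM'[OF fM[OF piM[OF p(1)]] b]] by simp
        ultimately show ?thesis using c by simp
      next
        case False
        then have "delta M' (f (\<pi> p)) b = f (\<pi> p)" unfolding cond_def using p b by blast
        moreover have "dl p b = p" unfolding dl_def using False by simp
        ultimately show ?thesis using p by simp
      qed
      then show ?case using p p_def by simp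
    qed
  qed
  have dA': "is_dfa \<Sigma> A'"
    unfolding is_dfa_def A'_def
  proof (intro conjI ballI)
    show "finite (states \<lparr>states = states A, init = i0, final = {p \<in> R. f (\<pi> p) \<in> final M'}, delta = dl\<rparr>)"
      using dA unfolding is_dfa_def by simp
    show "init \<lparr>states = states A, init = i0, final = {p \<in> R. f (\<pi> p) \<in> final M'}, delta = dl\<rparr>
      \<in> states \<lparr>states = states A, init = i0, final = {p \<in> R. f (\<pi> p) \<in> final M'}, delta = dl\<rparr>"
      using RA i0 by simp
    show "final \<lparr>states = states A, init = i0, final = {p \<in> R. f (\<pi> p) \<in> final M'}, delta = dl\<rparr>
      \<subseteq> states \<lparr>states = states A, init = i0, final = {p \<in> R. f (\<pi> p) \<in> final M'}, delta = dl\<rparr>"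
      using RA by auto
  next
    fix q b
    assume q: "q \<in> states \<lparr>states = states A, init = i0, final = {p \<in> R. f (\<pi> p) \<in> final M'}, delta = dl\<rparr>"
      and b: "b \<in> \<Sigma>"
    show "delta \<lparr>states = states A, init = i0, final = {p \<in> R. f (\<pi> p) \<in> final M'}, delta = dl\<rparr> q b
      \<in> states \<lparr>states = states A, init = i0, final = {p \<in> R. f (\<pi> p) \<in> final M'}, delta = dl\<rparr>"
    proof (cases "cond q b")
      case True
      then have "ch q b \<in> \<Sigma>" using chP by blast
      then have "delta A q (ch q b) \<in> states A" using dA q unfolding is_dfa_def by simp
      then show ?thesis using True by (simp add: dl_def)
    next
      case False then show ?thesis using q by (simp add: dl_def)
    qed
  qed
  have lA': "dfa_lang \<Sigma> A' = L'"
  proof (intro set_eqI)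
    fix w
    show "w \<in> dfa_lang \<Sigma> A' \<longleftrightarrow> w \<in> L'"
    proof (cases "w \<in> lists \<Sigma>")
      case True
      note I = inv[OF True]
      have "w \<in> dfa_lang \<Sigma> A' \<longleftrightarrow> f (\<pi> (foldl dl i0 w)) \<in> final M'"
        unfolding dfa_lang_def A'_def using True I by simp
      also have "\<dots> \<longleftrightarrow> w \<in> dfa_lang \<Sigma> M'" unfolding dfa_lang_def using True I by simp
      finally show ?thesis using lM' by simp
    next
      case False then show ?thesis using lM' unfolding dfa_lang_def by auto
    qed
  qed
  have gen: "dfa_genus \<Sigma> A' \<le> dfa_genus \<Sigma> A"
  proof -
    have "mg_genus (states A) (states A \<times> \<Sigma>) (\<lambda>(q, a). (q, dl q a))
        \<le> mg_genus (states A) (states A \<times> \<Sigma>) (\<lambda>(q, a). (q, delta A q a))"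
    proof (rule genus_transfer)
      show "finite (states A)" using dA unfolding is_dfa_def by simp
      show "finite (states A \<times> \<Sigma>)" using dA finS unfolding is_dfa_def by simp
      show "finite (states A \<times> \<Sigma>)" using dA finS unfolding is_dfa_def by simp
      show "\<And>e. e \<in> states A \<times> \<Sigma> \<Longrightarrow> fst (case e of (q, a) \<Rightarrow> (q, delta A q a)) \<in> states A \<and>
             snd (case e of (q, a) \<Rightarrow> (q, delta A q a)) \<in> states A"
        using dA unfolding is_dfa_def by auto
      show "\<And>e. e \<in> states A \<times> \<Sigma> \<Longrightarrow>
         (fst (case e of (q, a) \<Rightarrow> (q, dl q a)) = snd (case e of (q, a) \<Rightarrow> (q, dl q a)) \<and>
          fst (case e of (q, a) \<Rightarrow> (q, dl q a)) \<in> states A) \<or>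
         (\<exists>e0\<in>states A \<times> \<Sigma>. (case e of (q, a) \<Rightarrow> (q, dl q a)) = (case e0 of (q, a) \<Rightarrow> (q, delta A q a)))"
      proof -
        fix e assume e: "e \<in> states A \<times> \<Sigma>"
        obtain q b where qb: "e = (q, b)" by (cases e)
        have q: "q \<in> states A" using e qb by simp
        show "(fst (case e of (q, a) \<Rightarrow> (q, dl q a)) = snd (case e of (q, a) \<Rightarrow> (q, dl q a)) \<and>
          fst (case e of (q, a) \<Rightarrow> (q, dl q a)) \<in> states A) \<or>
         (\<exists>e0\<in>states A \<times> \<Sigma>. (case e of (q, a) \<Rightarrow> (q, dl q a)) = (case e0 of (q, a) \<Rightarrow> (q, delta A q a)))"
        proof (cases "cond q b")
          case True
          then have "ch q b \<in> \<Sigma>" using chP by blast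
          then have "(q, ch q b) \<in> states A \<times> \<Sigma>" using q by simp
          moreover have "dl q b = delta A q (ch q b)" using True by (simp add: dl_def)
          ultimately show ?thesis using qb by auto
        next
          case False then show ?thesis using qb q by (simp add: dl_def)
        qed
      qed
    qed
    then show ?thesis unfolding dfa_genus_def A'_def by simp
  qed
  show ?thesis using dA' lA' gen by blast
qed

lemma iso_sym:
  assumes "simple_digraph_iso \<Sigma> M M'" shows "simple_digraph_iso \<Sigma> M' M"
proof -
  obtain f where bij: "bij_betw f (states M) (states M')"
    and edge: "\<forall>q\<in>states M. \<forall>q'\<in>states M. dfa_simple_edge \<Sigma> M q q' \<longleftrightarrow> dfa_simple_edge \<Sigma> M' (f q) (f q')"
    using assms unfolding simple_digraph_iso_def by blast
  define g where "g = inv_into (states M) f"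
  have bg: "bij_betw g (states M') (states M)" unfolding g_def by (rule bij_betw_inv_into[OF bij])
  have fg: "\<And>q. q \<in> states M' \<Longrightarrow> f (g q) = q" unfolding g_def using bij
    by (meson bij_betw_inv_into_right)
  have "\<forall>q\<in>states M'. \<forall>q'\<in>states M'. dfa_simple_edge \<Sigma> M' q q' \<longleftrightarrow> dfa_simple_edge \<Sigma> M (g q) (g q')"
    using edge fg bg bij_betwE by (metis (no_types, lifting))
  then show ?thesis unfolding simple_digraph_iso_def using bg by blast
qed

lemma lang_genus_le:
  assumes finS: "finite \<Sigma>" and reg: "regular \<Sigma> L" and min: "minimal_dfa \<Sigma> L M" and min': "minimal_dfa \<Sigma> L' M'"
    and iso: "simple_digraph_iso \<Sigma> M M'"
  shows "lang_genus \<Sigma> L' \<le> lang_genus \<Sigma> L"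
proof -
  have ex: "\<exists>n A. is_dfa \<Sigma> A \<and> dfa_lang \<Sigma> A = L \<and> dfa_genus \<Sigma> A = n"
    using reg unfolding regular_def by blast
  obtain A where A: "is_dfa \<Sigma> A" "dfa_lang \<Sigma> A = L" "dfa_genus \<Sigma> A = lang_genus \<Sigma> L"
    using LeastI_ex[OF ex] unfolding lang_genus_def by blast
  obtain A' where A': "is_dfa \<Sigma> A'" "dfa_lang \<Sigma> A' = L'" "dfa_genus \<Sigma> A' \<le> dfa_genus \<Sigma> A"
    using transfer_le[OF finS min min' iso A(1,2)] by blast
  have "lang_genus \<Sigma> L' \<le> dfa_genus \<Sigma> A'"
    unfolding lang_genus_def by (rule Least_le) (use A' in blast)
  then show ?thesis using A'(3) A(3) by simp
qed

theorem mainTheorem12: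
  fixes \<Sigma> :: "'a set" and L L' :: "'a list set" and M M' :: "'a dfa"
  assumes "finite \<Sigma>"
    and "regular \<Sigma> L" and "regular \<Sigma> L'"
    and "minimal_dfa \<Sigma> L M" and "minimal_dfa \<Sigma> L' M'"
    and "simple_digraph_iso \<Sigma> M M'"
  shows "lang_genus \<Sigma> L = lang_genus \<Sigma> L'"
  using lang_genus_le[OF assms(1,2,4,5,6)] lang_genus_le[OF assms(1,3,5,4) iso_sym[OF assms(6)]]
  by simp


end
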